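(* Let $\mathcal S=(s_\alpha)_{\alpha\in L(\omega_1)}$ be a ladder system on $\omega_1$, let $K=K_{\mathcal S}$ be the associated ladder system space, and let $\phi:K\to K$ be any map whose restriction to $S(\omega_1)$ is an injection into $L(\omega_1)$ and which maps every element of $L(\omega_1)\cup\{\infty\}$ to $\infty$ (such a $\phi$ is continuous). Let $T=C_\phi:C(K)\to C(K)$, $f\mapsto f\circ\phi$. Then $T$ satisfies neither of the following conditions: (b) there exists $g\in\mathfrak B(K)$ such that $T^*+M_g^*:C(K)^*\to C(K)^*$ has separable range; (c) there exists $g\in\mathfrak B(K)$ such that the restriction of $(T^*+M_g^* )^*:C(K)^{**}\to C(K)^{**}$ to $C(K)$ (canonically embedded in $C(K)^{**}$) has separable range. In particular, there exists a bounded operator on $C(K_{\mathcal S})$ satisfying neither (b) nor (c).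
   Context: $L(\omega_1)$ denotes the set of limit ordinals in $\omega_1$ (the first uncountable ordinal) and $S(\omega_1)=\omega_1\setminus L(\omega_1)$. A ladder system on $\omega_1$ is a family $\mathcal S=(s_\alpha)_{\alpha\in L(\omega_1)}$ where for each limit $\alpha$, $s_\alpha=\{s^n_\alpha:n\in\omega\}$ and $(s^n_\alpha)_{n\in\omega}$ is a strictly increasing sequence in $S(\omega_1)$ converging (in the order sense) to $\alpha$. The ladder system topology $\tau_{\mathcal S}$ on $\omega_1$ is the topology in which every element of $S(\omega_1)$ is isolated and the basic neighborhoods of a limit ordinal $\alpha$ are the sets $\{\alpha\}\cup B$ with $B$ a cofinite subset of $s_\alpha$. This is a locally compact Hausdorff space, and $K_{\mathcal S}=\omega_1\cup\{\infty\}$ is its one-point compactification. $C(K)$ is the Banach space of continuous real-valued functions on $K$ with the sup norm; $C(K)^*$ is identified with the space of finite regular signed Borel measures on $K$. $\mathfrak B(K)$ is the space of bounded real-valued Borel functions on $K$. For $g\in\mathfrak B(K)$, $M_g^*:C(K)^*\to C(K)^*$ sends a measure $\mu$ to $g\,\mathrm d\mu$. Stars denote Banach space adjoints. *)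

theory Defs
  imports "HOL-Analysis.Analysis"
begin

text \<open>omega_1 is modelled by a well-ordered type 'a that is uncountable and all of whose
proper initial segments are countable (this determines 'a up to order isomorphism).\<close>

definition is_omega1 :: "'a::wellorder itself \<Rightarrow> bool" where
  "is_omega1 _ \<longleftrightarrow> uncountable (UNIV :: 'a set) \<and> (\<forall>x::'a. countable {y. y < x})"

text \<open>Nonzero limit ordinals: L(omega_1). S(omega_1) is the complement (0 and successors).\<close>
definition lim_ord :: "'a::wellorder \<Rightarrow> bool" where
  "lim_ord x \<longleftrightarrow> (\<exists>y. y < x) \<and> (\<forall>y<x. \<exists>z. y < z \<and> z < x)"

definition ladder_system :: "('a::wellorder \<Rightarrow> nat \<Rightarrow> 'a) \<Rightarrow> bool" where
  "ladder_system s \<longleftrightarrow>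
     (\<forall>\<alpha>. lim_ord \<alpha> \<longrightarrow>
        strict_mono (s \<alpha>) \<and> (\<forall>n. \<not> lim_ord (s \<alpha> n) \<and> s \<alpha> n < \<alpha>) \<and>
        (\<forall>\<beta><\<alpha>. \<exists>n. \<beta> < s \<alpha> n))"

definition ladder_top :: "('a::wellorder \<Rightarrow> nat \<Rightarrow> 'a) \<Rightarrow> 'a topology" where
  "ladder_top s = topology (\<lambda>U. \<forall>\<alpha>\<in>U. lim_ord \<alpha> \<longrightarrow> finite (range (s \<alpha>) - U))"

lemma istopology_ladder: "istopology (\<lambda>U. \<forall>\<alpha>\<in>U. lim_ord \<alpha> \<longrightarrow> finite (range (s \<alpha>) - U))"
  unfolding istopology_def
proof (intro conjI allI impI ballI)
  fix S T \<alpha>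
  assume "\<forall>\<alpha>\<in>S. lim_ord \<alpha> \<longrightarrow> finite (range (s \<alpha>) - S)"
     "\<forall>\<alpha>\<in>T. lim_ord \<alpha> \<longrightarrow> finite (range (s \<alpha>) - T)" "\<alpha> \<in> S \<inter> T" "lim_ord \<alpha>"
  then show "finite (range (s \<alpha>) - S \<inter> T)"
    by (metis Diff_Int IntD1 IntD2 finite_UnI)
next
  fix K :: "'a set set" and \<alpha>
  assume "\<forall>S\<in>K. \<forall>\<alpha>\<in>S. lim_ord \<alpha> \<longrightarrow> finite (range (s \<alpha>) - S)" "\<alpha> \<in> \<Union>K" "lim_ord \<alpha>"
  then obtain S where "S \<in> K" "\<alpha> \<in> S" "finite (range (s \<alpha>) - S)" by blast
  moreover have "range (s \<alpha>) - \<Union>K \<subseteq> range (s \<alpha>) - S" using \<open>S \<in> K\<close> by blast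
  ultimately show "finite (range (s \<alpha>) - \<Union>K)" by (meson finite_subset)
qed

lemma openin_ladder_top:
  "openin (ladder_top s) U \<longleftrightarrow> (\<forall>\<alpha>\<in>U. lim_ord \<alpha> \<longrightarrow> finite (range (s \<alpha>) - U))"
  unfolding ladder_top_def by (simp add: topology_inverse'[OF istopology_ladder])

lemma topspace_ladder_top [simp]: "topspace (ladder_top s) = UNIV"
proof -
  have "openin (ladder_top s) UNIV" by (simp add: openin_ladder_top)
  then show ?thesis by (meson openin_subset top.extremum_unique)
qed

text \<open>One-point (Alexandroff) compactification K_S = omega_1 \<union> {\<infinity>}, realised on 'a option
with None playing the role of \<infinity>.\<close>
definition Kopen :: "('a::wellorder \<Rightarrow> nat \<Rightarrow> 'a) \<Rightarrow> 'a option set \<Rightarrow> bool" where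
  "Kopen s V \<longleftrightarrow> openin (ladder_top s) (Some -` V) \<and>
     (None \<in> V \<longrightarrow> compactin (ladder_top s) (- (Some -` V)) \<and> closedin (ladder_top s) (- (Some -` V)))"

definition K_top :: "('a::wellorder \<Rightarrow> nat \<Rightarrow> 'a) \<Rightarrow> 'a option topology" where
  "K_top s = topology (Kopen s)"

lemma istopology_Kopen: "istopology (Kopen s)"
  unfolding istopology_def
proof (intro conjI allI impI)
  fix S T assume S: "Kopen s S" and T: "Kopen s T"
  have e: "- (Some -` (S \<inter> T)) = - (Some -` S) \<union> - (Some -` T)" by auto
  show "Kopen s (S \<inter> T)" using S T unfolding Kopen_def
    by (auto simp: e vimage_Int intro: compactin_Un closedin_Un)
next
  fix KK :: "'a option set set" assume A: "\<forall>K\<in>KK. Kopen s K"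
  have o: "openin (ladder_top s) (Some -` \<Union>KK)"
    using A unfolding Kopen_def vimage_Union by (auto intro: openin_Union)
  have c: "closedin (ladder_top s) (- (Some -` \<Union>KK))"
    using o by (simp add: closedin_def Compl_eq_Diff_UNIV double_diff)
  show "Kopen s (\<Union>KK)"
    unfolding Kopen_def
  proof (intro conjI impI o c)
    assume "None \<in> \<Union>KK"
    then obtain S where "S \<in> KK" "None \<in> S" by blast
    then have "compactin (ladder_top s) (- (Some -` S))" using A Kopen_def by blast
    moreover have "- (Some -` \<Union>KK) \<subseteq> - (Some -` S)" using \<open>S \<in> KK\<close> by blast
    ultimately show "compactin (ladder_top s) (- (Some -` \<Union>KK))" using c closed_compactin by blast
  qed
qed

lemma openin_K_top: "openin (K_top s) V \<longleftrightarrow> Kopen s V"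
  unfolding K_top_def by (simp add: topology_inverse'[OF istopology_Kopen])

definition CK :: "'b topology \<Rightarrow> ('b \<Rightarrow> real) set" where
  "CK X = {f. continuous_map X euclideanreal f}"

definition sup_norm :: "'b topology \<Rightarrow> ('b \<Rightarrow> real) \<Rightarrow> real" where
  "sup_norm X f = Sup ((\<lambda>x. \<bar>f x\<bar>) ` topspace X)"

definition borel_sets :: "'b topology \<Rightarrow> 'b set set" where
  "borel_sets X = sigma_sets (topspace X) {U. openin X U}"

definition signed_measure :: "'b topology \<Rightarrow> ('b set \<Rightarrow> real) \<Rightarrow> bool" where
  "signed_measure X \<mu> \<longleftrightarrow> (\<forall>A. A \<notin> borel_sets X \<longrightarrow> \<mu> A = 0) \<and> \<mu> {} = 0 \<and>
     (\<forall>A::nat \<Rightarrow> 'b set. range A \<subseteq> borel_sets X \<longrightarrow> disjoint_family A \<longrightarrow>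
        (\<lambda>n. \<mu> (A n)) sums \<mu> (\<Union>n. A n))"

definition variation :: "'b topology \<Rightarrow> ('b set \<Rightarrow> real) \<Rightarrow> 'b set \<Rightarrow> real" where
  "variation X \<mu> A = Sup {(\<Sum>B\<in>P. \<bar>\<mu> B\<bar>) | P. finite P \<and> P \<subseteq> borel_sets X \<and> disjoint P \<and> \<Union>P = A}"

definition tv_norm :: "'b topology \<Rightarrow> ('b set \<Rightarrow> real) \<Rightarrow> real" where
  "tv_norm X \<mu> = variation X \<mu> (topspace X)"

definition regular_sm :: "'b topology \<Rightarrow> ('b set \<Rightarrow> real) \<Rightarrow> bool" where
  "regular_sm X \<mu> \<longleftrightarrow> (\<forall>A\<in>borel_sets X. \<forall>e>0. \<exists>C U. compactin X C \<and> openin X U \<and>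
      C \<subseteq> A \<and> A \<subseteq> U \<and> variation X \<mu> (U - C) < e)"

text \<open>C(K)^*: the finite regular signed Borel measures.\<close>
definition Mreg :: "'b topology \<Rightarrow> ('b set \<Rightarrow> real) set" where
  "Mreg X = {\<mu>. signed_measure X \<mu> \<and> regular_sm X \<mu>}"

text \<open>Integration against a signed measure via its Jordan decomposition.\<close>
definition jordan_pos :: "'b topology \<Rightarrow> ('b set \<Rightarrow> real) \<Rightarrow> 'b measure" where
  "jordan_pos X \<mu> = measure_of (topspace X) (borel_sets X)
      (\<lambda>A. ennreal ((variation X \<mu> A + \<mu> A) / 2))"

definition jordan_neg :: "'b topology \<Rightarrow> ('b set \<Rightarrow> real) \<Rightarrow> 'b measure" where
  "jordan_neg X \<mu> = measure_of (topspace X) (borel_sets X)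
      (\<lambda>A. ennreal ((variation X \<mu> A - \<mu> A) / 2))"

definition sint :: "'b topology \<Rightarrow> ('b set \<Rightarrow> real) \<Rightarrow> ('b \<Rightarrow> real) \<Rightarrow> real" where
  "sint X \<mu> f = (\<integral>x. f x \<partial>jordan_pos X \<mu>) - (\<integral>x. f x \<partial>jordan_neg X \<mu>)"

definition bborel :: "'b topology \<Rightarrow> ('b \<Rightarrow> real) \<Rightarrow> bool" where
  "bborel X g \<longleftrightarrow> (\<forall>U. open U \<longrightarrow> {x \<in> topspace X. g x \<in> U} \<in> borel_sets X) \<and>
     (\<exists>B. \<forall>x\<in>topspace X. \<bar>g x\<bar> \<le> B)"

definition bounded_op :: "'b topology \<Rightarrow> (('b \<Rightarrow> real) \<Rightarrow> ('b \<Rightarrow> real)) \<Rightarrow> bool" where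
  "bounded_op X T \<longleftrightarrow> (\<forall>f\<in>CK X. T f \<in> CK X) \<and>
     (\<forall>f\<in>CK X. \<forall>h\<in>CK X. \<forall>a b. \<forall>x\<in>topspace X.
        T (\<lambda>y. a * f y + b * h y) x = a * T f x + b * T h x) \<and>
     (\<exists>B. \<forall>f\<in>CK X. sup_norm X (T f) \<le> B * sup_norm X f)"

text \<open>Banach adjoint T^* : C(K)^* \<rightarrow> C(K)^* under the Riesz identification.\<close>
definition adj :: "'b topology \<Rightarrow> (('b \<Rightarrow> real) \<Rightarrow> ('b \<Rightarrow> real)) \<Rightarrow> ('b set \<Rightarrow> real) \<Rightarrow> ('b set \<Rightarrow> real)" where
  "adj X T \<mu> = (THE \<nu>. \<nu> \<in> Mreg X \<and> (\<forall>f\<in>CK X. sint X \<nu> f = sint X \<mu> (T f)))"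

definition mult_dual :: "'b topology \<Rightarrow> ('b \<Rightarrow> real) \<Rightarrow> ('b set \<Rightarrow> real) \<Rightarrow> ('b set \<Rightarrow> real)" where
  "mult_dual X g \<mu> = (\<lambda>A. if A \<in> borel_sets X then sint X \<mu> (\<lambda>x. indicator A x * g x) else 0)"

definition Aop :: "'b topology \<Rightarrow> (('b \<Rightarrow> real) \<Rightarrow> ('b \<Rightarrow> real)) \<Rightarrow> ('b \<Rightarrow> real) \<Rightarrow> ('b set \<Rightarrow> real) \<Rightarrow> ('b set \<Rightarrow> real)" where
  "Aop X T g \<mu> = (\<lambda>A. adj X T \<mu> A + mult_dual X g \<mu> A)"

definition cond_b :: "'b topology \<Rightarrow> (('b \<Rightarrow> real) \<Rightarrow> ('b \<Rightarrow> real)) \<Rightarrow> ('b \<Rightarrow> real) \<Rightarrow> bool" where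
  "cond_b X T g \<longleftrightarrow> (let R = Aop X T g ` Mreg X in
     \<exists>D. countable D \<and> D \<subseteq> R \<and> (\<forall>x\<in>R. \<forall>e>0. \<exists>d\<in>D. tv_norm X (\<lambda>A. x A - d A) < e))"

text \<open>(T^* + M_g^*)^* applied to f \<in> C(K) \<subseteq> C(K)^{**}: the functional mu \<mapsto> <f, (T^*+M_g^*) mu>
on C(K)^*; and the norm distance of C(K)^{**}.\<close>
definition bidual_elt :: "'b topology \<Rightarrow> (('b \<Rightarrow> real) \<Rightarrow> ('b \<Rightarrow> real)) \<Rightarrow> ('b \<Rightarrow> real) \<Rightarrow> ('b \<Rightarrow> real) \<Rightarrow> (('b set \<Rightarrow> real) \<Rightarrow> real)" where
  "bidual_elt X T g f = (\<lambda>\<mu>. if \<mu> \<in> Mreg X then sint X (Aop X T g \<mu>) f else 0)"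

definition bidual_dist :: "'b topology \<Rightarrow> (('b set \<Rightarrow> real) \<Rightarrow> real) \<Rightarrow> (('b set \<Rightarrow> real) \<Rightarrow> real) \<Rightarrow> real" where
  "bidual_dist X \<Phi> \<Psi> = Sup {\<bar>\<Phi> \<mu> - \<Psi> \<mu>\<bar> | \<mu>. \<mu> \<in> Mreg X \<and> tv_norm X \<mu> \<le> 1}"

definition cond_c :: "'b topology \<Rightarrow> (('b \<Rightarrow> real) \<Rightarrow> ('b \<Rightarrow> real)) \<Rightarrow> ('b \<Rightarrow> real) \<Rightarrow> bool" where
  "cond_c X T g \<longleftrightarrow> (let R = bidual_elt X T g ` CK X in
     \<exists>D. countable D \<and> D \<subseteq> R \<and> (\<forall>x\<in>R. \<forall>e>0. \<exists>d\<in>D. bidual_dist X x d < e))"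

definition ladder_map :: "('a::wellorder option \<Rightarrow> 'a option) \<Rightarrow> bool" where
  "ladder_map \<phi> \<longleftrightarrow> inj_on \<phi> (Some ` {x. \<not> lim_ord x}) \<and>
     (\<forall>x. \<not> lim_ord x \<longrightarrow> \<phi> (Some x) \<in> Some ` {\<alpha>. lim_ord \<alpha>}) \<and>
     (\<forall>\<alpha>. lim_ord \<alpha> \<longrightarrow> \<phi> (Some \<alpha>) = None) \<and> \<phi> None = None"

end

theory Submission
  imports Defs "HOL-Probability.Giry_Monad"
begin

lemma sigma_algebra_borel: "sigma_algebra (topspace X) (borel_sets X)"
  unfolding borel_sets_def by (rule sigma_algebra_sigma_sets) (auto dest: openin_subset)

lemma borel_open: "openin X U \<Longrightarrow> U \<in> borel_sets X"
  unfolding borel_sets_def by (auto intro: sigma_sets.Basic)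

lemma borel_closed: "closedin X C \<Longrightarrow> C \<in> borel_sets X"
proof -
  assume c: "closedin X C"
  then have o: "openin X (topspace X - C)" by (simp add: closedin_def)
  have "C = topspace X - (topspace X - C)" using c closedin_subset by blast
  then show ?thesis using o unfolding borel_sets_def
    by (metis mem_Collect_eq sigma_sets.Basic sigma_sets.Compl)
qed

lemma borel_facts:
  "A \<in> borel_sets X \<Longrightarrow> A \<subseteq> topspace X"
  "A \<in> borel_sets X \<Longrightarrow> B \<in> borel_sets X \<Longrightarrow> A \<union> B \<in> borel_sets X"
  "A \<in> borel_sets X \<Longrightarrow> B \<in> borel_sets X \<Longrightarrow> A \<inter> B \<in> borel_sets X"
  "A \<in> borel_sets X \<Longrightarrow> B \<in> borel_sets X \<Longrightarrow> A - B \<in> borel_sets X"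
  "{} \<in> borel_sets X"
  "topspace X \<in> borel_sets X"
  "range F \<subseteq> borel_sets X \<Longrightarrow> (\<Union>i::nat. F i) \<in> borel_sets X"
  "finite P \<Longrightarrow> P \<subseteq> borel_sets X \<Longrightarrow> \<Union>P \<in> borel_sets X"
proof -
  interpret sigma_algebra "topspace X" "borel_sets X" by (rule sigma_algebra_borel)
  show "A \<in> borel_sets X \<Longrightarrow> A \<subseteq> topspace X" using sets_into_space by blast
  show "A \<in> borel_sets X \<Longrightarrow> B \<in> borel_sets X \<Longrightarrow> A \<union> B \<in> borel_sets X" by blast
  show "A \<in> borel_sets X \<Longrightarrow> B \<in> borel_sets X \<Longrightarrow> A \<inter> B \<in> borel_sets X" by blast
  show "A \<in> borel_sets X \<Longrightarrow> B \<in> borel_sets X \<Longrightarrow> A - B \<in> borel_sets X" by blast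
  show "{} \<in> borel_sets X" by blast
  show "topspace X \<in> borel_sets X" by blast
  show "range F \<subseteq> borel_sets X \<Longrightarrow> (\<Union>i::nat. F i) \<in> borel_sets X" by blast
  show "finite P \<Longrightarrow> P \<subseteq> borel_sets X \<Longrightarrow> \<Union>P \<in> borel_sets X" by blast
qed

lemmas borel_sub = borel_facts(1)
lemmas borel_Un = borel_facts(2)
lemmas borel_Int = borel_facts(3)
lemmas borel_Diff = borel_facts(4)
lemmas borel_empty = borel_facts(5)
lemmas borel_top = borel_facts(6)
lemmas borel_UN = borel_facts(7)
lemmas borel_finite_Union = borel_facts(8)

lemma sm_empty: "signed_measure X \<nu> \<Longrightarrow> \<nu> {} = 0"
  by (simp add: signed_measure_def)

lemma sm_add:
  assumes sm: "signed_measure X \<nu>" and A: "A \<in> borel_sets X" and B: "B \<in> borel_sets X"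
    and d: "A \<inter> B = {}"
  shows "\<nu> (A \<union> B) = \<nu> A + \<nu> B"
proof -
  define F where "F n = (if n = 0 then A else if n = 1 then B else {})" for n :: nat
  have r: "range F \<subseteq> borel_sets X" using A B borel_empty by (auto simp: F_def)
  have df: "disjoint_family F" using d by (auto simp: disjoint_family_on_def F_def)
  have s: "(\<lambda>n. \<nu> (F n)) sums \<nu> (\<Union>n. F n)" using sm r df by (simp add: signed_measure_def)
  have u: "(\<Union>n. F n) = A \<union> B"
    by (auto simp: F_def split: if_splits)
  have "(\<lambda>n. \<nu> (F n)) sums (\<Sum>n\<in>{0,1}. \<nu> (F n))"
    by (rule sums_finite) (auto simp: F_def sm_empty[OF sm])
  then have "\<nu> (\<Union>n. F n) = \<nu> A + \<nu> B" using s sums_unique2 by (fastforce simp: F_def)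
  then show ?thesis using u by simp
qed

lemma sm_diff:
  assumes sm: "signed_measure X \<nu>" and A: "A \<in> borel_sets X" and B: "B \<in> borel_sets X"
    and "B \<subseteq> A"
  shows "\<nu> (A - B) = \<nu> A - \<nu> B"
proof -
  have "\<nu> ((A - B) \<union> B) = \<nu> (A - B) + \<nu> B"
    by (rule sm_add[OF sm borel_Diff[OF A B] B]) auto
  moreover have "(A - B) \<union> B = A" using assms by auto
  ultimately show ?thesis by simp
qed

lemma sm_split:
  assumes sm: "signed_measure X \<nu>" and A: "A \<in> borel_sets X" and B: "B \<in> borel_sets X"
  shows "\<nu> A = \<nu> (A \<inter> B) + \<nu> (A - B)"
proof -
  have "\<nu> ((A \<inter> B) \<union> (A - B)) = \<nu> (A \<inter> B) + \<nu> (A - B)"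
    by (rule sm_add[OF sm borel_Int[OF A B] borel_Diff[OF A B]]) auto
  moreover have "(A \<inter> B) \<union> (A - B) = A" by auto
  ultimately show ?thesis by simp
qed

lemma sm_bounded:
  assumes sm: "signed_measure X \<nu>"
  shows "\<exists>M. \<forall>A\<in>borel_sets X. \<bar>\<nu> A\<bar> \<le> M"
proof (rule ccontr)
  assume nb: "\<not> ?thesis"
  define bad where "bad A \<longleftrightarrow> A \<in> borel_sets X \<and> (\<forall>M. \<exists>B\<in>borel_sets X. B \<subseteq> A \<and> M < \<bar>\<nu> B\<bar>)" for A
  have bad0: "bad (topspace X)"
    unfolding bad_def using nb borel_sub borel_top by (meson not_le)
  have step: "\<exists>p. bad (fst p) \<and> snd p \<in> borel_sets X \<and> snd p \<subseteq> A \<and> fst p = A - snd p \<and> 1 \<le> \<bar>\<nu> (snd p)\<bar>"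
    if bA: "bad A" for A
  proof -
    have A: "A \<in> borel_sets X" using bA bad_def by blast
    obtain B0 where B0: "B0 \<in> borel_sets X" "B0 \<subseteq> A" "\<bar>\<nu> A\<bar> + 1 < \<bar>\<nu> B0\<bar>"
      using bA unfolding bad_def by blast
    define C1 where "C1 = A - B0"
    have C1: "C1 \<in> borel_sets X" using A B0 by (simp add: C1_def borel_Diff)
    have "\<nu> C1 = \<nu> A - \<nu> B0" unfolding C1_def by (rule sm_diff[OF sm A B0(1,2)])
    then have C1v: "1 < \<bar>\<nu> C1\<bar>" using B0(3) by linarith
    have "bad B0 \<or> bad C1"
    proof (rule ccontr)
      assume "\<not> (bad B0 \<or> bad C1)"
      then obtain M1 M2 where M1: "\<forall>B\<in>borel_sets X. B \<subseteq> B0 \<longrightarrow> \<bar>\<nu> B\<bar> \<le> M1"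
        and M2: "\<forall>B\<in>borel_sets X. B \<subseteq> C1 \<longrightarrow> \<bar>\<nu> B\<bar> \<le> M2"
        using B0(1) C1 unfolding bad_def by (meson not_le)
      obtain B where B: "B \<in> borel_sets X" "B \<subseteq> A" "M1 + M2 < \<bar>\<nu> B\<bar>"
        using bA unfolding bad_def by blast
      have "\<nu> B = \<nu> (B \<inter> B0) + \<nu> (B - B0)" by (rule sm_split[OF sm B(1) B0(1)])
      moreover have "\<bar>\<nu> (B \<inter> B0)\<bar> \<le> M1" using M1 B(1) B0(1) borel_Int by blast
      moreover have "\<bar>\<nu> (B - B0)\<bar> \<le> M2" using M2 B(1,2) B0(1) borel_Diff C1_def by blast
      ultimately show False using B(3) by linarith
    qed
    then show ?thesis
    proof
      assume "bad B0"
      then show ?thesis using C1 C1v B0 by (intro exI[of _ "(B0, C1)"]) (auto simp: C1_def)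
    next
      assume "bad C1"
      then show ?thesis using C1 C1v B0 by (intro exI[of _ "(C1, B0)"]) (auto simp: C1_def)
    qed
  qed
  then obtain st where st: "\<And>A. bad A \<Longrightarrow> bad (fst (st A)) \<and> snd (st A) \<in> borel_sets X \<and>
      snd (st A) \<subseteq> A \<and> fst (st A) = A - snd (st A) \<and> 1 \<le> \<bar>\<nu> (snd (st A))\<bar>"
    by metis
  define AS where "AS n = ((\<lambda>A. fst (st A)) ^^ n) (topspace X)" for n
  define CS where "CS n = snd (st (AS n))" for n
  have ASs: "AS (Suc n) = fst (st (AS n))" for n by (simp add: AS_def)
  have badn: "bad (AS n)" for n
  proof (induction n)
    case 0 then show ?case using bad0 by (simp add: AS_def)
  next
    case (Suc n) then show ?case unfolding ASs using st[OF Suc] by blast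
  qed
  have CSp: "CS n \<in> borel_sets X" "CS n \<subseteq> AS n" "AS (Suc n) = AS n - CS n" "1 \<le> \<bar>\<nu> (CS n)\<bar>" for n
    using st[OF badn[of n]] by (auto simp: CS_def ASs)
  have mono: "AS m \<subseteq> AS n" if "n \<le> m" for m n
    using that
  proof (induction m)
    case 0 then show ?case by simp
  next
    case (Suc m)
    then show ?case using CSp(3)[of m] by (metis Diff_subset le_Suc_eq order_trans order_refl)
  qed
  have dj: "disjoint_family CS"
    unfolding disjoint_family_on_def
  proof (intro ballI impI)
    fix m n :: nat assume "m \<noteq> n"
    then have "m < n \<or> n < m" by arith
    then show "CS m \<inter> CS n = {}"
    proof
      assume "m < n"
      then have "CS n \<subseteq> AS (Suc m)" using CSp(2)[of n] mono[of "Suc m" n] by auto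
      then show ?thesis using CSp(3)[of m] by auto
    next
      assume "n < m"
      then have "CS m \<subseteq> AS (Suc n)" using CSp(2)[of m] mono[of "Suc n" m] by auto
      then show ?thesis using CSp(3)[of n] by auto
    qed
  qed
  have "(\<lambda>n. \<nu> (CS n)) sums \<nu> (\<Union>n. CS n)"
    using sm dj CSp(1) by (auto simp: signed_measure_def)
  then have "(\<lambda>n. \<nu> (CS n)) \<longlonglongrightarrow> 0" using summable_LIMSEQ_zero sums_summable by blast
  then obtain n0 where "\<forall>n\<ge>n0. norm (\<nu> (CS n) - 0) < 1"
    using LIMSEQ_D[of "\<lambda>n. \<nu> (CS n)" 0 1] by auto
  then show False using CSp(4)[of n0] by auto
qed


definition Pv :: "'b topology \<Rightarrow> ('b set \<Rightarrow> real) \<Rightarrow> 'b set \<Rightarrow> real" where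
  "Pv X \<nu> A = Sup {\<nu> B | B. B \<in> borel_sets X \<and> B \<subseteq> A}"

lemma sm_neg: "signed_measure X \<nu> \<Longrightarrow> signed_measure X (\<lambda>A. - \<nu> A)"
  unfolding signed_measure_def using sums_minus by (simp add: sums_minus)

lemma Pv_bdd:
  assumes sm: "signed_measure X \<nu>"
  shows "bdd_above {\<nu> B | B. B \<in> borel_sets X \<and> B \<subseteq> A}"
proof -
  obtain M where "\<forall>A\<in>borel_sets X. \<bar>\<nu> A\<bar> \<le> M" using sm_bounded[OF sm] by blast
  then have "\<forall>x\<in>{\<nu> B | B. B \<in> borel_sets X \<and> B \<subseteq> A}. x \<le> M" by fastforce
  then show ?thesis unfolding bdd_above_def by blast
qed

lemma Pv_upper:
  "signed_measure X \<nu> \<Longrightarrow> B \<in> borel_sets X \<Longrightarrow> B \<subseteq> A \<Longrightarrow> \<nu> B \<le> Pv X \<nu> A"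
  unfolding Pv_def by (rule cSup_upper) (auto intro: Pv_bdd)

lemma Pv_least:
  "(\<And>B. B \<in> borel_sets X \<Longrightarrow> B \<subseteq> A \<Longrightarrow> \<nu> B \<le> z) \<Longrightarrow> Pv X \<nu> A \<le> z"
  unfolding Pv_def by (rule cSup_least) (use borel_empty in auto)

lemma Pv_nonneg: "signed_measure X \<nu> \<Longrightarrow> 0 \<le> Pv X \<nu> A"
  using Pv_upper[of X \<nu> "{}" A] borel_empty sm_empty by fastforce

lemma Pv_ge: "signed_measure X \<nu> \<Longrightarrow> A \<in> borel_sets X \<Longrightarrow> \<nu> A \<le> Pv X \<nu> A"
  using Pv_upper by blast

lemma Pv_mono: "signed_measure X \<nu> \<Longrightarrow> A \<subseteq> A' \<Longrightarrow> Pv X \<nu> A \<le> Pv X \<nu> A'"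
  by (rule Pv_least) (meson Pv_upper order_trans)

lemma Pv_empty: "signed_measure X \<nu> \<Longrightarrow> Pv X \<nu> {} = 0"
  using Pv_nonneg[of X \<nu> "{}"] Pv_least[of X "{}" \<nu> 0] sm_empty by fastforce

lemma Pv_approx:
  assumes sm: "signed_measure X \<nu>" and e: "0 < e"
  shows "\<exists>B\<in>borel_sets X. B \<subseteq> A \<and> Pv X \<nu> A - e < \<nu> B"
proof -
  have "Pv X \<nu> A - e < Sup {\<nu> B | B. B \<in> borel_sets X \<and> B \<subseteq> A}" using e by (simp add: Pv_def)
  then have "\<exists>x\<in>{\<nu> B | B. B \<in> borel_sets X \<and> B \<subseteq> A}. Pv X \<nu> A - e < x"
    by (subst (asm) less_cSup_iff) (use Pv_bdd[OF sm] borel_empty in auto)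
  then show ?thesis by auto
qed

lemma Pv_add:
  assumes sm: "signed_measure X \<nu>" and A: "A \<in> borel_sets X" and A': "A' \<in> borel_sets X"
    and d: "A \<inter> A' = {}"
  shows "Pv X \<nu> (A \<union> A') = Pv X \<nu> A + Pv X \<nu> A'"
proof (rule antisym)
  show "Pv X \<nu> (A \<union> A') \<le> Pv X \<nu> A + Pv X \<nu> A'"
  proof (rule Pv_least)
    fix B assume B: "B \<in> borel_sets X" "B \<subseteq> A \<union> A'"
    have "\<nu> B = \<nu> (B \<inter> A) + \<nu> (B - A)" by (rule sm_split[OF sm B(1) A])
    moreover have "\<nu> (B \<inter> A) \<le> Pv X \<nu> A" using Pv_upper[OF sm] B A borel_Int by blast
    moreover have "\<nu> (B - A) \<le> Pv X \<nu> A'" using Pv_upper[OF sm] B A borel_Diff by blast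
    ultimately show "\<nu> B \<le> Pv X \<nu> A + Pv X \<nu> A'" by linarith
  qed
next
  show "Pv X \<nu> A + Pv X \<nu> A' \<le> Pv X \<nu> (A \<union> A')"
  proof (rule field_le_epsilon)
    fix e :: real assume e: "0 < e"
    obtain B where B: "B \<in> borel_sets X" "B \<subseteq> A" "Pv X \<nu> A - e/2 < \<nu> B"
      using Pv_approx[OF sm, of "e/2" A] e by auto
    obtain B' where B': "B' \<in> borel_sets X" "B' \<subseteq> A'" "Pv X \<nu> A' - e/2 < \<nu> B'"
      using Pv_approx[OF sm, of "e/2" A'] e by auto
    have "\<nu> (B \<union> B') = \<nu> B + \<nu> B'" using B B' d by (intro sm_add[OF sm]) auto
    moreover have "\<nu> (B \<union> B') \<le> Pv X \<nu> (A \<union> A')"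
      using B B' by (intro Pv_upper[OF sm] borel_Un) auto
    ultimately show "Pv X \<nu> A + Pv X \<nu> A' \<le> Pv X \<nu> (A \<union> A') + e" using B B' by linarith
  qed
qed

lemma Pv_sums:
  assumes sm: "signed_measure X \<nu>" and r: "range A \<subseteq> borel_sets X" and d: "disjoint_family A"
  shows "(\<lambda>n. Pv X \<nu> (A n)) sums Pv X \<nu> (\<Union>n. A n)"
proof -
  have fin: "Pv X \<nu> (\<Union>i<n. A i) = (\<Sum>i<n. Pv X \<nu> (A i))" for n
  proof (induction n)
    case 0 then show ?case by (simp add: Pv_empty[OF sm])
  next
    case (Suc n)
    have u: "(\<Union>i<Suc n. A i) = (\<Union>i<n. A i) \<union> A n" by (auto simp: lessThan_Suc)
    have b: "(\<Union>i<n. A i) \<in> borel_sets X"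
      using r by (intro borel_finite_Union) auto
    have dd: "(\<Union>i<n. A i) \<inter> A n = {}" using d unfolding disjoint_family_on_def by (auto dest: less_imp_neq)
    show ?case using Suc r b dd by (simp add: u Pv_add[OF sm] range_subsetD)
  qed
  have le: "(\<Sum>i<n. Pv X \<nu> (A i)) \<le> Pv X \<nu> (\<Union>n. A n)" for n
    unfolding fin[symmetric] by (rule Pv_mono[OF sm]) auto
  have sm1: "summable (\<lambda>n. Pv X \<nu> (A n))"
    by (rule summableI_nonneg_bounded[OF Pv_nonneg[OF sm] le])
  have "(\<Sum>n. Pv X \<nu> (A n)) \<le> Pv X \<nu> (\<Union>n. A n)" by (rule suminf_le_const[OF sm1 le])
  moreover have "Pv X \<nu> (\<Union>n. A n) \<le> (\<Sum>n. Pv X \<nu> (A n))"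
  proof (rule Pv_least)
    fix B assume B: "B \<in> borel_sets X" "B \<subseteq> (\<Union>n. A n)"
    have r2: "range (\<lambda>n. B \<inter> A n) \<subseteq> borel_sets X" using B r borel_Int by blast
    have d2: "disjoint_family (\<lambda>n. B \<inter> A n)" using d by (auto simp: disjoint_family_on_def)
    have "(\<lambda>n. \<nu> (B \<inter> A n)) sums \<nu> (\<Union>n. B \<inter> A n)"
      using sm r2 d2 unfolding signed_measure_def by blast
    moreover have "(\<Union>n. B \<inter> A n) = B" using B by auto
    ultimately have s: "(\<lambda>n. \<nu> (B \<inter> A n)) sums \<nu> B" by simp
    show "\<nu> B \<le> (\<Sum>n. Pv X \<nu> (A n))"
      by (rule sums_le[OF _ s summable_sums[OF sm1]])
         (use Pv_upper[OF sm] r2 in blast)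
  qed
  ultimately have "(\<Sum>n. Pv X \<nu> (A n)) = Pv X \<nu> (\<Union>n. A n)" by linarith
  then show ?thesis using summable_sums[OF sm1] by simp
qed

lemma Pv_neg:
  assumes sm: "signed_measure X \<nu>" and A: "A \<in> borel_sets X"
  shows "Pv X (\<lambda>B. - \<nu> B) A = Pv X \<nu> A - \<nu> A"
proof (rule antisym)
  show "Pv X (\<lambda>B. - \<nu> B) A \<le> Pv X \<nu> A - \<nu> A"
  proof (rule Pv_least)
    fix B assume B: "B \<in> borel_sets X" "B \<subseteq> A"
    have "\<nu> (A - B) = \<nu> A - \<nu> B" by (rule sm_diff[OF sm A B])
    moreover have "\<nu> (A - B) \<le> Pv X \<nu> A" using Pv_upper[OF sm] A B borel_Diff by blast
    ultimately show "- \<nu> B \<le> Pv X \<nu> A - \<nu> A" by linarith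
  qed
next
  have "Pv X \<nu> A \<le> Pv X (\<lambda>B. - \<nu> B) A + \<nu> A"
  proof (rule Pv_least)
    fix B assume B: "B \<in> borel_sets X" "B \<subseteq> A"
    have "\<nu> (A - B) = \<nu> A - \<nu> B" by (rule sm_diff[OF sm A B])
    moreover have "- \<nu> (A - B) \<le> Pv X (\<lambda>B. - \<nu> B) A"
      using Pv_upper[OF sm_neg[OF sm]] A B borel_Diff by blast
    ultimately show "\<nu> B \<le> Pv X (\<lambda>B. - \<nu> B) A + \<nu> A" by linarith
  qed
  then show "Pv X \<nu> A - \<nu> A \<le> Pv X (\<lambda>B. - \<nu> B) A" by linarith
qed

lemma disjoint_insertD:
  assumes d: "disjoint (insert B Q)" and n: "B \<notin> Q"
  shows "B \<inter> \<Union>Q = {} \<and> disjoint Q"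
proof
  have "B \<inter> C = {}" if "C \<in> Q" for C
    using d that n unfolding disjoint_def by (metis insertCI)
  then show "B \<inter> \<Union>Q = {}" by blast
  show "disjoint Q" using d unfolding disjoint_def by (meson insertCI)
qed

lemma sm_fin_add:
  assumes sm: "signed_measure X \<nu>"
  shows "finite Q \<Longrightarrow> Q \<subseteq> borel_sets X \<Longrightarrow> disjoint Q \<Longrightarrow> \<nu> (\<Union>Q) = (\<Sum>B\<in>Q. \<nu> B)"
proof (induction Q rule: finite_induct)
  case empty then show ?case by (simp add: sm_empty[OF sm])
next
  case (insert B Q)
  have dd: "B \<inter> \<Union>Q = {}" "disjoint Q" using disjoint_insertD[OF insert(5) insert(2)] by auto
  have b1: "\<Union>Q \<in> borel_sets X" using insert(1,4) by (intro borel_finite_Union) auto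
  have b2: "B \<in> borel_sets X" using insert(4) by auto
  have "\<nu> (\<Union>(insert B Q)) = \<nu> B + \<nu> (\<Union>Q)" using sm_add[OF sm b2 b1 dd(1)] by simp
  also have "\<nu> (\<Union>Q) = (\<Sum>B\<in>Q. \<nu> B)" using insert(3,4) dd(2) by auto
  finally show ?case using insert(1,2) by simp
qed

lemma part_sum_le:
  assumes sm: "signed_measure X \<nu>" and P: "finite P" "P \<subseteq> borel_sets X" "disjoint P"
    and A: "\<Union>P = A"
  shows "(\<Sum>B\<in>P. \<bar>\<nu> B\<bar>) \<le> 2 * Pv X \<nu> A - \<nu> A"
proof -
  define Q where "Q = {B\<in>P. 0 \<le> \<nu> B}"
  define R where "R = P - Q"
  have QR: "finite Q" "finite R" "Q \<subseteq> P" "R \<subseteq> P" "Q \<inter> R = {}" "P = Q \<union> R"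
    using P(1) by (auto simp: Q_def R_def)
  have dQ: "disjoint Q" using P(3) QR(3) by (rule pairwise_subset)
  have dR: "disjoint R" using P(3) QR(4) by (rule pairwise_subset)
  have s1: "(\<Sum>B\<in>P. \<bar>\<nu> B\<bar>) = (\<Sum>B\<in>Q. \<bar>\<nu> B\<bar>) + (\<Sum>B\<in>R. \<bar>\<nu> B\<bar>)"
    using QR(1,2,5,6) sum.union_disjoint by metis
  have s2: "(\<Sum>B\<in>Q. \<bar>\<nu> B\<bar>) = (\<Sum>B\<in>Q. \<nu> B)"
    by (rule sum.cong) (auto simp: Q_def)
  have s3: "(\<Sum>B\<in>R. \<bar>\<nu> B\<bar>) = - (\<Sum>B\<in>R. \<nu> B)"
    unfolding sum_negf[symmetric] by (rule sum.cong) (auto simp: Q_def R_def)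
  have bQ: "\<Union>Q \<in> borel_sets X" using QR(1,3) P(2) by (intro borel_finite_Union) auto
  have bR: "\<Union>R \<in> borel_sets X" using QR(2,4) P(2) by (intro borel_finite_Union) auto
  have s4: "(\<Sum>B\<in>Q. \<nu> B) = \<nu> (\<Union>Q)"
    using QR(1,3) P(2) dQ by (intro sm_fin_add[OF sm, symmetric]) auto
  have s5: "(\<Sum>B\<in>R. \<nu> B) = \<nu> (\<Union>R)"
    using QR(2,4) P(2) dR by (intro sm_fin_add[OF sm, symmetric]) auto
  have dj: "\<Union>Q \<inter> \<Union>R = {}"
  proof -
    have "C \<inter> D = {}" if "C \<in> Q" "D \<in> R" for C D
      using P(3) QR that unfolding disjoint_def by (metis Un_iff disjoint_iff)
    then show ?thesis by blast
  qed
  have un: "\<Union>Q \<union> \<Union>R = A" using QR(6) A by auto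
  have s6: "\<nu> A = \<nu> (\<Union>Q) + \<nu> (\<Union>R)" using sm_add[OF sm bQ bR dj] un by simp
  have s7: "\<nu> (\<Union>Q) \<le> Pv X \<nu> A"
    using QR(3) A bQ by (intro Pv_upper[OF sm]) auto
  show ?thesis using s1 s2 s3 s4 s5 s6 s7 by linarith
qed

lemma var_eq:
  assumes sm: "signed_measure X \<nu>" and A: "A \<in> borel_sets X"
  shows "variation X \<nu> A = 2 * Pv X \<nu> A - \<nu> A"
  unfolding variation_def
proof (rule cSup_eq_non_empty)
  show "{\<Sum>B\<in>P. \<bar>\<nu> B\<bar> |P. finite P \<and> P \<subseteq> borel_sets X \<and> disjoint P \<and> \<Union> P = A} \<noteq> {}"
    using A by (auto intro!: exI[of _ "{A}"] simp: disjoint_def)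
  show "x \<le> 2 * Pv X \<nu> A - \<nu> A" if "x \<in> {\<Sum>B\<in>P. \<bar>\<nu> B\<bar> |P. finite P \<and> P \<subseteq> borel_sets X \<and> disjoint P \<and> \<Union> P = A}" for x
    using that part_sum_le[OF sm] by auto
  fix y assume ub: "\<And>x. x \<in> {\<Sum>B\<in>P. \<bar>\<nu> B\<bar> |P. finite P \<and> P \<subseteq> borel_sets X \<and> disjoint P \<and> \<Union> P = A} \<Longrightarrow> x \<le> y"
  show "2 * Pv X \<nu> A - \<nu> A \<le> y"
  proof (rule field_le_epsilon)
    fix e :: real assume e: "0 < e"
    obtain B where B: "B \<in> borel_sets X" "B \<subseteq> A" "Pv X \<nu> A - e/2 < \<nu> B"
      using Pv_approx[OF sm, of "e/2" A] e by auto
    have AB: "A - B \<in> borel_sets X" using A B borel_Diff by blast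
    have nAB: "\<nu> (A - B) = \<nu> A - \<nu> B" by (rule sm_diff[OF sm A B(1,2)])
    have mem: "(\<Sum>C\<in>{B, A - B}. \<bar>\<nu> C\<bar>) \<in> {\<Sum>B\<in>P. \<bar>\<nu> B\<bar> |P. finite P \<and> P \<subseteq> borel_sets X \<and> disjoint P \<and> \<Union> P = A}"
      using B AB by (auto intro!: exI[of _ "{B, A - B}"] simp: disjoint_def)
    have "2 * \<nu> B - \<nu> A \<le> (\<Sum>C\<in>{B, A - B}. \<bar>\<nu> C\<bar>)"
    proof (cases "B = A - B")
      case True
      then have "B = {}" "A = {}" by auto
      then show ?thesis by (simp add: sm_empty[OF sm])
    next
      case False
      then show ?thesis using nAB by simp
    qed
    then show "2 * Pv X \<nu> A - \<nu> A \<le> y + e" using ub[OF mem] B by linarith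
  qed
qed

lemma var_eq2:
  assumes sm: "signed_measure X \<nu>" and A: "A \<in> borel_sets X"
  shows "variation X \<nu> A = Pv X \<nu> A + Pv X (\<lambda>B. - \<nu> B) A"
  using var_eq[OF sm A] Pv_neg[OF sm A] by simp

lemma var_mono:
  assumes sm: "signed_measure X \<nu>" and A: "A \<in> borel_sets X" "A' \<in> borel_sets X" "A \<subseteq> A'"
  shows "variation X \<nu> A \<le> variation X \<nu> A'"
  using var_eq2[OF sm A(1)] var_eq2[OF sm A(2)] Pv_mono[OF sm A(3)] Pv_mono[OF sm_neg[OF sm] A(3)]
  by simp

lemma var_nonneg: "signed_measure X \<nu> \<Longrightarrow> A \<in> borel_sets X \<Longrightarrow> 0 \<le> variation X \<nu> A"
  using var_eq2 Pv_nonneg sm_neg by (metis add_nonneg_nonneg)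

lemma abs_le_var: "signed_measure X \<nu> \<Longrightarrow> A \<in> borel_sets X \<Longrightarrow> \<bar>\<nu> A\<bar> \<le> variation X \<nu> A"
  using var_eq2[of X \<nu> A] Pv_ge[of X \<nu> A] Pv_ge[of X "\<lambda>B. - \<nu> B" A] sm_neg[of X \<nu>]
    Pv_nonneg[of X \<nu> A] Pv_nonneg[of X "\<lambda>B. - \<nu> B" A] by linarith

lemma var_Un_le:
  assumes sm: "signed_measure X \<nu>" and A: "A \<in> borel_sets X" "A' \<in> borel_sets X"
  shows "variation X \<nu> (A \<union> A') \<le> variation X \<nu> A + variation X \<nu> A'"
proof -
  have e: "A \<union> A' = A \<union> (A' - A)" by auto
  have b: "A' - A \<in> borel_sets X" using A borel_Diff by blast
  have dj: "A \<inter> (A' - A) = {}" by auto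
  have "variation X \<nu> (A \<union> A') = variation X \<nu> A + variation X \<nu> (A' - A)"
    unfolding e var_eq2[OF sm borel_Un[OF A(1) b]] var_eq2[OF sm A(1)] var_eq2[OF sm b]
      Pv_add[OF sm A(1) b dj] Pv_add[OF sm_neg[OF sm] A(1) b dj] by simp
  moreover have "variation X \<nu> (A' - A) \<le> variation X \<nu> A'"
    using var_mono[OF sm b A(2)] by auto
  ultimately show ?thesis by linarith
qed

lemma ms_Pv:
  assumes sm: "signed_measure X \<nu>"
  shows "measure_space (topspace X) (borel_sets X) (\<lambda>A. ennreal (Pv X \<nu> A))"
  unfolding measure_space_def positive_def countably_additive_def
proof (intro conjI sigma_algebra_borel allI impI)
  show "ennreal (Pv X \<nu> {}) = 0" by (simp add: Pv_empty[OF sm])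
  fix A :: "nat \<Rightarrow> _" assume r: "range A \<subseteq> borel_sets X" and d: "disjoint_family A"
  have s: "(\<lambda>n. Pv X \<nu> (A n)) sums Pv X \<nu> (\<Union>n. A n)" by (rule Pv_sums[OF sm r d])
  show "(\<Sum>i. ennreal (Pv X \<nu> (A i))) = ennreal (Pv X \<nu> (\<Union>i. A i))"
    using suminf_ennreal2[OF Pv_nonneg[OF sm] sums_summable[OF s]] s sums_unique by metis
qed

lemma borel_Pow: "borel_sets X \<subseteq> Pow (topspace X)"
  using borel_sub by blast

lemma sigma_sets_borel: "sigma_sets (topspace X) (borel_sets X) = borel_sets X"
  by (rule sigma_algebra.sigma_sets_eq[OF sigma_algebra_borel])

lemma jordan_pos_eq:
  assumes sm: "signed_measure X \<nu>"
  shows "jordan_pos X \<nu> = measure_of (topspace X) (borel_sets X) (\<lambda>A. ennreal (Pv X \<nu> A))"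
  unfolding jordan_pos_def
  by (rule measure_of_eq[OF borel_Pow]) (simp add: var_eq[OF sm] sigma_sets_borel)


definition BM :: "'b topology \<Rightarrow> 'b measure" where
  "BM X = measure_of (topspace X) (borel_sets X) (\<lambda>_. 0)"

lemma sets_BM[simp]: "sets (BM X) = borel_sets X"
  unfolding BM_def by (simp add: sets_measure_of[OF borel_Pow] sigma_sets_borel)

lemma space_BM[simp]: "space (BM X) = topspace X"
  unfolding BM_def by (simp add: space_measure_of[OF borel_Pow])

lemma meas_transfer:
  assumes "sets M = borel_sets X" "f \<in> borel_measurable (BM X)"
  shows "f \<in> borel_measurable M"
proof -
  have "borel_measurable M = borel_measurable (BM X)"
    by (rule measurable_cong_sets) (simp_all add: assms)
  then show ?thesis using assms(2) by metis
qed

lemma space_eq_top: "sets M = borel_sets X \<Longrightarrow> space M = topspace X"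
  using sets_eq_imp_space_eq[of M "BM X"] by simp

lemma intg_bnd:
  fixes u :: "'b \<Rightarrow> real"
  assumes "finite_measure M" "sets M = borel_sets X" "u \<in> borel_measurable (BM X)"
    "\<And>x. x \<in> topspace X \<Longrightarrow> \<bar>u x\<bar> \<le> B"
  shows "integrable M u"
proof -
  interpret finite_measure M by fact
  have "AE x in M. norm (u x) \<le> B"
    by (rule AE_I2) (use assms(4) space_eq_top[OF assms(2)] in auto)
  then show ?thesis
    by (rule integrable_const_bound[where B=B]) (rule meas_transfer[OF assms(2,3)])
qed

lemma lin_comb_nonneg:
  fixes M N :: "nat \<Rightarrow> 'b measure" and c d :: "nat \<Rightarrow> real" and X :: "'b topology"
  assumes sM: "\<And>i. sets (M i) = borel_sets X" "\<And>i. finite_measure (M i)" "\<And>i. 0 \<le> c i"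
  assumes sN: "\<And>j. sets (N j) = borel_sets X" "\<And>j. finite_measure (N j)" "\<And>j. 0 \<le> d j"
  assumes eq: "\<And>A. A \<in> borel_sets X \<Longrightarrow>
      (\<Sum>i<m. c i * measure (M i) A) = (\<Sum>j<n. d j * measure (N j) A)"
  assumes f: "f \<in> borel_measurable (BM X)" "\<And>x. 0 \<le> f x"
    and bnd: "\<And>x. x \<in> topspace X \<Longrightarrow> f x \<le> B"
  shows "(\<Sum>i<m. c i * integral\<^sup>L (M i) f) = (\<Sum>j<n. d j * integral\<^sup>L (N j) f)"
proof -
  define P where "P u \<longleftrightarrow> (\<exists>B. \<forall>x\<in>topspace X. u x \<le> B) \<longrightarrow>
      (\<Sum>i<m. c i * integral\<^sup>L (M i) u) = (\<Sum>j<n. d j * integral\<^sup>L (N j) u)" for u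
  have spM: "space (M i) = topspace X" for i using space_eq_top sM(1) by blast
  have spN: "space (N j) = topspace X" for j using space_eq_top sN(1) by blast
  have intM: "integrable (M i) u" if "u \<in> borel_measurable (BM X)" "\<And>x. 0 \<le> u x"
      "\<And>x. x \<in> topspace X \<Longrightarrow> u x \<le> B'" for i and u :: "'b \<Rightarrow> real" and B'
    by (rule intg_bnd[OF sM(2) sM(1) that(1), of B']) (use that(2,3) in simp)
  have intN: "integrable (N j) u" if "u \<in> borel_measurable (BM X)" "\<And>x. 0 \<le> u x"
      "\<And>x. x \<in> topspace X \<Longrightarrow> u x \<le> B'" for j and u :: "'b \<Rightarrow> real" and B'
    by (rule intg_bnd[OF sN(2) sN(1) that(1), of B']) (use that(2,3) in simp)
  have "P f"
  using f
  proof (induction f rule: borel_measurable_induct_real)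
    case (set A)
    then have A: "A \<in> borel_sets X" by simp
    have "integral\<^sup>L (M i) (indicator A) = measure (M i) A" for i
      using borel_sub[OF A] by (simp add: spM Int_absorb2)
    moreover have "integral\<^sup>L (N j) (indicator A) = measure (N j) A" for j
      using borel_sub[OF A] by (simp add: spN Int_absorb2)
    ultimately show ?case unfolding P_def using eq[OF A] by simp
  next
    case (mult u c')
    show ?case unfolding P_def
    proof
      assume "\<exists>B. \<forall>x\<in>topspace X. c' * u x \<le> B"
      then obtain B' where B': "\<forall>x\<in>topspace X. c' * u x \<le> B'" by blast
      show "(\<Sum>i<m. c i * integral\<^sup>L (M i) (\<lambda>x. c' * u x)) = (\<Sum>j<n. d j * integral\<^sup>L (N j) (\<lambda>x. c' * u x))"
      proof (cases "c' = 0")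
        case True then show ?thesis by simp
      next
        case False
        then have "0 < c'" using mult by simp
        then have "\<forall>x\<in>topspace X. u x \<le> B' / c'" using B' by (simp add: field_simps mult.commute)
        then have "(\<Sum>i<m. c i * integral\<^sup>L (M i) u) = (\<Sum>j<n. d j * integral\<^sup>L (N j) u)"
          using mult unfolding P_def by blast
        then have "c' * (\<Sum>i<m. c i * integral\<^sup>L (M i) u) = c' * (\<Sum>j<n. d j * integral\<^sup>L (N j) u)"
          by simp
        then show ?thesis by (simp add: sum_distrib_left mult.left_commute)
      qed
    qed
  next
    case (add u v)
    show ?case unfolding P_def
    proof
      assume "\<exists>B. \<forall>x\<in>topspace X. v x + u x \<le> B"
      then obtain B' where B': "\<forall>x\<in>topspace X. v x + u x \<le> B'" by blast
      have bu: "\<forall>x\<in>topspace X. u x \<le> B'"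
      proof
        fix x assume "x \<in> topspace X"
        then have "v x + u x \<le> B'" "0 \<le> v x" using B' \<open>\<And>x. 0 \<le> v x\<close> by auto
        then show "u x \<le> B'" by linarith
      qed
      have bv: "\<forall>x\<in>topspace X. v x \<le> B'"
      proof
        fix x assume "x \<in> topspace X"
        then have "v x + u x \<le> B'" "0 \<le> u x" using B' \<open>\<And>x. 0 \<le> u x\<close> by auto
        then show "v x \<le> B'" by linarith
      qed
      have eu: "(\<Sum>i<m. c i * integral\<^sup>L (M i) u) = (\<Sum>j<n. d j * integral\<^sup>L (N j) u)"
        using \<open>P u\<close> bu unfolding P_def by blast
      have ev: "(\<Sum>i<m. c i * integral\<^sup>L (M i) v) = (\<Sum>j<n. d j * integral\<^sup>L (N j) v)"
        using \<open>P v\<close> bv unfolding P_def by blast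
      have "integral\<^sup>L (M i) (\<lambda>x. v x + u x) = integral\<^sup>L (M i) v + integral\<^sup>L (M i) u" for i
        by (rule Bochner_Integration.integral_add) (use intM[OF \<open>v \<in> borel_measurable (BM X)\<close> \<open>\<And>x. 0 \<le> v x\<close>] intM[OF \<open>u \<in> borel_measurable (BM X)\<close> \<open>\<And>x. 0 \<le> u x\<close>] bu bv in blast)+
      moreover have "integral\<^sup>L (N j) (\<lambda>x. v x + u x) = integral\<^sup>L (N j) v + integral\<^sup>L (N j) u" for j
        by (rule Bochner_Integration.integral_add) (use intN[OF \<open>v \<in> borel_measurable (BM X)\<close> \<open>\<And>x. 0 \<le> v x\<close>] intN[OF \<open>u \<in> borel_measurable (BM X)\<close> \<open>\<And>x. 0 \<le> u x\<close>] bu bv in blast)+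
      ultimately show "(\<Sum>i<m. c i * integral\<^sup>L (M i) (\<lambda>x. v x + u x)) = (\<Sum>j<n. d j * integral\<^sup>L (N j) (\<lambda>x. v x + u x))"
        using eu ev by (simp add: distrib_left sum.distrib)
    qed
  next
    case (seq U)
    show ?case unfolding P_def
    proof
      assume "\<exists>B. \<forall>x\<in>topspace X. f x \<le> B"
      then obtain B' where B': "\<forall>x\<in>topspace X. f x \<le> B'" by blast
      have conv: "(\<lambda>i. U i x) \<longlonglongrightarrow> f x" if "x \<in> topspace X" for x using seq that by simp
      have le: "U i x \<le> f x" if "x \<in> topspace X" for i x
      proof -
        have "incseq (\<lambda>i. U i x)" using \<open>incseq U\<close> unfolding incseq_def le_fun_def by blast
        moreover have "(\<lambda>i. U i x) \<longlonglongrightarrow> f x" using seq that by simp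
        ultimately show ?thesis by (rule incseq_le)
      qed
      have bU: "\<forall>x\<in>topspace X. U i x \<le> B'" for i using le B' by (meson order_trans)
      have eU: "(\<Sum>i<m. c i * integral\<^sup>L (M i) (U k)) = (\<Sum>j<n. d j * integral\<^sup>L (N j) (U k))" for k
        using \<open>\<And>i. P (U i)\<close> bU[of k] unfolding P_def by blast
      have fint: "integrable (M i) f" for i using intM[OF f(1,2)] B' by blast
      have fintN: "integrable (N j) f" for j using intN[OF f(1,2)] B' by blast
      have cM: "(\<lambda>k. integral\<^sup>L (M i) (U k)) \<longlonglongrightarrow> integral\<^sup>L (M i) f" for i
      proof (rule integral_dominated_convergence[where w=f])
        show "f \<in> borel_measurable (M i)" by (rule meas_transfer[OF sM(1) f(1)])
        show "U k \<in> borel_measurable (M i)" for k by (rule meas_transfer[OF sM(1) \<open>\<And>i. U i \<in> borel_measurable (BM X)\<close>])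
        show "integrable (M i) f" by (rule fint)
        show "AE x in M i. (\<lambda>k. U k x) \<longlonglongrightarrow> f x"
          by (rule AE_I2) (use conv spM in simp)
        show "AE x in M i. norm (U k x) \<le> f x" for k
          by (rule AE_I2) (use le \<open>\<And>i x. 0 \<le> U i x\<close> spM in simp)
      qed
      have cN: "(\<lambda>k. integral\<^sup>L (N j) (U k)) \<longlonglongrightarrow> integral\<^sup>L (N j) f" for j
      proof (rule integral_dominated_convergence[where w=f])
        show "f \<in> borel_measurable (N j)" by (rule meas_transfer[OF sN(1) f(1)])
        show "U k \<in> borel_measurable (N j)" for k by (rule meas_transfer[OF sN(1) \<open>\<And>i. U i \<in> borel_measurable (BM X)\<close>])
        show "integrable (N j) f" by (rule fintN)
        show "AE x in N j. (\<lambda>k. U k x) \<longlonglongrightarrow> f x"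
          by (rule AE_I2) (use conv spN in simp)
        show "AE x in N j. norm (U k x) \<le> f x" for k
          by (rule AE_I2) (use le \<open>\<And>i x. 0 \<le> U i x\<close> spN in simp)
      qed
      have l1: "(\<lambda>k. \<Sum>i<m. c i * integral\<^sup>L (M i) (U k)) \<longlonglongrightarrow> (\<Sum>i<m. c i * integral\<^sup>L (M i) f)"
        by (intro tendsto_sum tendsto_mult tendsto_const cM)
      have l2: "(\<lambda>k. \<Sum>j<n. d j * integral\<^sup>L (N j) (U k)) \<longlonglongrightarrow> (\<Sum>j<n. d j * integral\<^sup>L (N j) f)"
        by (intro tendsto_sum tendsto_mult tendsto_const cN)
      show "(\<Sum>i<m. c i * integral\<^sup>L (M i) f) = (\<Sum>j<n. d j * integral\<^sup>L (N j) f)"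
        using l1 l2 eU LIMSEQ_unique by simp
    qed
  qed
  then show ?thesis using bnd unfolding P_def by blast
qed

lemma lin_comb:
  fixes M N :: "nat \<Rightarrow> 'b measure" and c d :: "nat \<Rightarrow> real" and X :: "'b topology"
    and f :: "'b \<Rightarrow> real"
  assumes sM: "\<And>i. sets (M i) = borel_sets X" "\<And>i. finite_measure (M i)" "\<And>i. 0 \<le> c i"
  assumes sN: "\<And>j. sets (N j) = borel_sets X" "\<And>j. finite_measure (N j)" "\<And>j. 0 \<le> d j"
  assumes eq: "\<And>A. A \<in> borel_sets X \<Longrightarrow>
      (\<Sum>i<m. c i * measure (M i) A) = (\<Sum>j<n. d j * measure (N j) A)"
  assumes f: "f \<in> borel_measurable (BM X)"
    and bnd: "\<And>x. x \<in> topspace X \<Longrightarrow> \<bar>f x\<bar> \<le> B"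
  shows "(\<Sum>i<m. c i * integral\<^sup>L (M i) f) = (\<Sum>j<n. d j * integral\<^sup>L (N j) f)"
proof -
  define fp where "fp x = max (f x) 0" for x
  define fm where "fm x = max (- f x) 0" for x
  have fpm: "f = (\<lambda>x. fp x - fm x)" by (auto simp: fp_def fm_def)
  have mp: "fp \<in> borel_measurable (BM X)" "fm \<in> borel_measurable (BM X)"
    using f unfolding fp_def fm_def by auto
  have bp: "\<bar>fp x\<bar> \<le> B" "\<bar>fm x\<bar> \<le> B" if "x \<in> topspace X" for x
    using bnd[OF that] by (auto simp: fp_def fm_def)
  have ep: "(\<Sum>i<m. c i * integral\<^sup>L (M i) fp) = (\<Sum>j<n. d j * integral\<^sup>L (N j) fp)"
    by (rule lin_comb_nonneg[OF sM sN eq mp(1), of B]) (use bp in \<open>auto simp: fp_def\<close>)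
  have em: "(\<Sum>i<m. c i * integral\<^sup>L (M i) fm) = (\<Sum>j<n. d j * integral\<^sup>L (N j) fm)"
    by (rule lin_comb_nonneg[OF sM sN eq mp(2), of B]) (use bp in \<open>auto simp: fm_def\<close>)
  have iM: "integral\<^sup>L (M i) f = integral\<^sup>L (M i) fp - integral\<^sup>L (M i) fm" for i
    unfolding fpm
    by (rule Bochner_Integration.integral_diff; rule intg_bnd[OF sM(2) sM(1)]) (use mp bp in auto)
  have iN: "integral\<^sup>L (N j) f = integral\<^sup>L (N j) fp - integral\<^sup>L (N j) fm" for j
    unfolding fpm
    by (rule Bochner_Integration.integral_diff; rule intg_bnd[OF sN(2) sN(1)]) (use mp bp in auto)
  show ?thesis using ep em
    by (simp add: iM iN right_diff_distrib sum_subtractf)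
qed

lemma jn_eq: "jordan_neg X \<nu> = jordan_pos X (\<lambda>A. - \<nu> A)"
  unfolding jordan_neg_def jordan_pos_def variation_def by simp

lemma jp_sets[simp]: "sets (jordan_pos X \<nu>) = borel_sets X"
  unfolding jordan_pos_def by (simp add: sets_measure_of[OF borel_Pow] sigma_sets_borel)

lemma jp_space[simp]: "space (jordan_pos X \<nu>) = topspace X"
  unfolding jordan_pos_def by (simp add: space_measure_of[OF borel_Pow])

lemma jp_finite: "finite_measure (jordan_pos X \<nu>)"
  by (rule finite_measureI) (simp add: jordan_pos_def emeasure_measure_of_conv)

lemma jn_sets[simp]: "sets (jordan_neg X \<nu>) = borel_sets X"
  by (simp add: jn_eq)
lemma jn_space[simp]: "space (jordan_neg X \<nu>) = topspace X"
  by (simp add: jn_eq)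
lemma jn_finite: "finite_measure (jordan_neg X \<nu>)"
  by (simp add: jn_eq jp_finite)

lemma jp_emeasure:
  assumes sm: "signed_measure X \<nu>" and A: "A \<in> borel_sets X"
  shows "emeasure (jordan_pos X \<nu>) A = ennreal (Pv X \<nu> A)"
  using ms_Pv[OF sm] A unfolding jordan_pos_eq[OF sm] measure_space_def
  by (intro emeasure_measure_of_sigma) auto

lemma jp_measure:
  assumes sm: "signed_measure X \<nu>" and A: "A \<in> borel_sets X"
  shows "measure (jordan_pos X \<nu>) A = Pv X \<nu> A"
  unfolding measure_def jp_emeasure[OF sm A] using Pv_nonneg[OF sm] by simp

lemma jn_measure:
  assumes sm: "signed_measure X \<nu>" and A: "A \<in> borel_sets X"
  shows "measure (jordan_neg X \<nu>) A = Pv X (\<lambda>B. - \<nu> B) A"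
  unfolding jn_eq using jp_measure[OF sm_neg[OF sm] A] .

lemma jpn_diff:
  assumes sm: "signed_measure X \<nu>" and A: "A \<in> borel_sets X"
  shows "measure (jordan_pos X \<nu>) A - measure (jordan_neg X \<nu>) A = \<nu> A"
  using jp_measure[OF sm A] jn_measure[OF sm A] Pv_neg[OF sm A] by simp

lemma jpn_sum:
  assumes sm: "signed_measure X \<nu>" and A: "A \<in> borel_sets X"
  shows "measure (jordan_pos X \<nu>) A + measure (jordan_neg X \<nu>) A = variation X \<nu> A"
  using jp_measure[OF sm A] jn_measure[OF sm A] var_eq2[OF sm A] by simp

lemma sint_repr:
  fixes M N :: "nat \<Rightarrow> 'b measure" and c d :: "nat \<Rightarrow> real" and X :: "'b topology"
    and f :: "'b \<Rightarrow> real"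
  assumes sm: "signed_measure X \<nu>"
  assumes sM: "\<And>i. sets (M i) = borel_sets X" "\<And>i. finite_measure (M i)" "\<And>i. 0 \<le> c i"
  assumes sN: "\<And>j. sets (N j) = borel_sets X" "\<And>j. finite_measure (N j)" "\<And>j. 0 \<le> d j"
  assumes eq: "\<And>A. A \<in> borel_sets X \<Longrightarrow>
      \<nu> A + (\<Sum>j<n. d j * measure (N j) A) = (\<Sum>i<m. c i * measure (M i) A)"
  assumes f: "f \<in> borel_measurable (BM X)"
    and bnd: "\<And>x. x \<in> topspace X \<Longrightarrow> \<bar>f x\<bar> \<le> B"
  shows "sint X \<nu> f + (\<Sum>j<n. d j * integral\<^sup>L (N j) f) = (\<Sum>i<m. c i * integral\<^sup>L (M i) f)"
proof -
  define M' where "M' i = (if i = 0 then jordan_pos X \<nu> else N (i - 1))" for i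
  define c' where "c' i = (if i = 0 then 1 else d (i - 1))" for i
  define N' where "N' i = (if i = 0 then jordan_neg X \<nu> else M (i - 1))" for i
  define d' where "d' i = (if i = 0 then 1 else c (i - 1))" for i
  have "(\<Sum>i<Suc n. c' i * integral\<^sup>L (M' i) f) = (\<Sum>j<Suc m. d' j * integral\<^sup>L (N' j) f)"
  proof (rule lin_comb[OF _ _ _ _ _ _ _ f bnd])
    show "sets (M' i) = borel_sets X" "finite_measure (M' i)" "0 \<le> c' i" for i
      using sN jp_finite by (auto simp: M'_def c'_def)
    show "sets (N' i) = borel_sets X" "finite_measure (N' i)" "0 \<le> d' i" for i
      using sM jn_finite by (auto simp: N'_def d'_def)
    fix A assume A: "A \<in> borel_sets X"
    show "(\<Sum>i<Suc n. c' i * measure (M' i) A) = (\<Sum>j<Suc m. d' j * measure (N' j) A)"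
      using eq[OF A] jpn_diff[OF sm A]
      by (simp only: sum.lessThan_Suc_shift) (simp add: M'_def c'_def N'_def d'_def)
  qed
  then show ?thesis
    by (simp only: sum.lessThan_Suc_shift) (simp add: M'_def c'_def N'_def d'_def sint_def)
qed


definition dsf :: "'b topology \<Rightarrow> 'b \<Rightarrow> 'b set \<Rightarrow> real" where
  "dsf X a = (\<lambda>A. if A \<in> borel_sets X then indicator A a else 0)"

lemma dsf_sm: "signed_measure X (dsf X a)"
  unfolding signed_measure_def
proof (intro conjI allI impI)
  show "dsf X a {} = 0" by (simp add: dsf_def borel_empty)
  show "A \<notin> borel_sets X \<Longrightarrow> dsf X a A = 0" for A by (simp add: dsf_def)
  fix A :: "nat \<Rightarrow> _" assume r: "range A \<subseteq> borel_sets X" and d: "disjoint_family A"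
  have u: "(\<Union>n. A n) \<in> borel_sets X" using r by (rule borel_UN)
  show "(\<lambda>n. dsf X a (A n)) sums dsf X a (\<Union>n. A n)"
  proof (cases "\<exists>k. a \<in> A k")
    case True
    then obtain k where k: "a \<in> A k" by blast
    have "(\<lambda>n. dsf X a (A n)) = (\<lambda>n. if n = k then dsf X a (A n) else 0)"
    proof
      fix n show "dsf X a (A n) = (if n = k then dsf X a (A n) else 0)"
        using d k r unfolding disjoint_family_on_def dsf_def by (auto simp: indicator_def)
    qed
    moreover have "dsf X a (A k) = dsf X a (\<Union>n. A n)" using k r u by (auto simp: dsf_def indicator_def)
    ultimately show ?thesis using sums_single[of k "\<lambda>n. dsf X a (A n)"] by simp
  next
    case False
    then have "(\<lambda>n. dsf X a (A n)) = (\<lambda>n. 0)" by (auto simp: dsf_def)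
    moreover have "dsf X a (\<Union>n. A n) = 0" using False by (auto simp: dsf_def)
    ultimately show ?thesis by simp
  qed
qed

lemma sm_lin:
  assumes "signed_measure X \<mu>" "signed_measure X \<nu>"
  shows "signed_measure X (\<lambda>A. \<mu> A + c * \<nu> A)"
  using assms unfolding signed_measure_def by (auto intro!: sums_add sums_mult)

lemma ret_facts:
  assumes a: "a \<in> topspace X"
  shows "sets (return (BM X) a) = borel_sets X" "finite_measure (return (BM X) a)"
    "\<And>A. A \<in> borel_sets X \<Longrightarrow> measure (return (BM X) a) A = indicator A a"
    "\<And>f::'b \<Rightarrow> real. f \<in> borel_measurable (BM X) \<Longrightarrow> integral\<^sup>L (return (BM X) a) f = f a"
proof -
  show "sets (return (BM X) a) = borel_sets X" by simp
  show "finite_measure (return (BM X) a)"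
  proof -
    interpret prob_space "return (BM X) a" using prob_space_return[of a "BM X"] a by simp
    show ?thesis by (rule finite_measure_axioms)
  qed
  show "measure (return (BM X) a) A = indicator A a" if "A \<in> borel_sets X" for A
    using that by (simp add: measure_return)
  show "integral\<^sup>L (return (BM X) a) f = f a" if "f \<in> borel_measurable (BM X)" for f :: "'b \<Rightarrow> real"
    using integral_return[of a "BM X" f] that a by simp
qed

lemma sint_two:
  fixes f :: "'b \<Rightarrow> real"
  assumes a: "a \<in> topspace X" and b: "b \<in> topspace X"
    and f: "f \<in> borel_measurable (BM X)" "\<And>x. x \<in> topspace X \<Longrightarrow> \<bar>f x\<bar> \<le> B"
  shows "sint X (\<lambda>A. dsf X a A + c * dsf X b A) f = f a + c * f b"
proof (cases "0 \<le> c")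
  case True
  define M where "M i = (if i = 0 then return (BM X) a else return (BM X) b)" for i :: nat
  define cc where "cc i = (if i = 0 then 1 else c)" for i :: nat
  have "sint X (\<lambda>A. dsf X a A + c * dsf X b A) f + (\<Sum>j<0. cc j * integral\<^sup>L (M j) f)
      = (\<Sum>i<2. cc i * integral\<^sup>L (M i) f)"
  proof (rule sint_repr[OF sm_lin[OF dsf_sm dsf_sm] _ _ _ _ _ _ _ f])
    show "sets (M i) = borel_sets X" "finite_measure (M i)" "0 \<le> cc i" for i
      using ret_facts[OF a] ret_facts[OF b] True by (auto simp: M_def cc_def)
    show "sets (M i) = borel_sets X" "finite_measure (M i)" "0 \<le> cc i" for i
      using ret_facts[OF a] ret_facts[OF b] True by (auto simp: M_def cc_def)
    fix A assume A: "A \<in> borel_sets X"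
    show "dsf X a A + c * dsf X b A + (\<Sum>j<0. cc j * measure (M j) A) = (\<Sum>i<2. cc i * measure (M i) A)"
      using A ret_facts(3)[OF a A] ret_facts(3)[OF b A]
      by (simp add: numeral_2_eq_2 M_def cc_def dsf_def)
  qed
  then show ?thesis using ret_facts(4)[OF a f(1)] ret_facts(4)[OF b f(1)]
    by (simp add: numeral_2_eq_2 M_def cc_def)
next
  case False
  define M where "M i = return (BM X) a" for i :: nat
  define N where "N i = return (BM X) b" for i :: nat
  define cc where "cc i = (1::real)" for i :: nat
  define dd where "dd i = - c" for i :: nat
  have "sint X (\<lambda>A. dsf X a A + c * dsf X b A) f + (\<Sum>j<1. dd j * integral\<^sup>L (N j) f)
      = (\<Sum>i<1. cc i * integral\<^sup>L (M i) f)"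
  proof (rule sint_repr[OF sm_lin[OF dsf_sm dsf_sm] _ _ _ _ _ _ _ f])
    show "sets (M i) = borel_sets X" "finite_measure (M i)" "0 \<le> cc i" for i
      using ret_facts[OF a] by (auto simp: M_def cc_def)
    show "sets (N i) = borel_sets X" "finite_measure (N i)" "0 \<le> dd i" for i
      using ret_facts[OF b] False by (auto simp: N_def dd_def)
    fix A assume A: "A \<in> borel_sets X"
    show "dsf X a A + c * dsf X b A + (\<Sum>j<1. dd j * measure (N j) A) = (\<Sum>i<1. cc i * measure (M i) A)"
      using A ret_facts(3)[OF a A] ret_facts(3)[OF b A]
      by (simp add: M_def N_def cc_def dd_def dsf_def)
  qed
  then show ?thesis using ret_facts(4)[OF a f(1)] ret_facts(4)[OF b f(1)]
    by (simp add: M_def N_def cc_def dd_def)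
qed

lemma sint_dirac:
  fixes f :: "'b \<Rightarrow> real"
  assumes a: "a \<in> topspace X"
    and f: "f \<in> borel_measurable (BM X)" "\<And>x. x \<in> topspace X \<Longrightarrow> \<bar>f x\<bar> \<le> B"
  shows "sint X (dsf X a) f = f a"
  using sint_two[OF a a f, of 0] by simp

lemma int_bound:
  fixes f :: "'b \<Rightarrow> real"
  assumes "finite_measure M" "\<And>x. x \<in> space M \<Longrightarrow> \<bar>f x\<bar> \<le> B" "0 \<le> B"
  shows "\<bar>integral\<^sup>L M f\<bar> \<le> B * measure M (space M)"
proof (cases "integrable M f")
  case True
  interpret finite_measure M by fact
  have "\<bar>integral\<^sup>L M f\<bar> \<le> (\<integral>x. \<bar>f x\<bar> \<partial>M)" by (rule integral_abs_bound)
  also have "\<dots> \<le> (\<integral>x. B \<partial>M)"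
    by (rule integral_mono) (use True assms in auto)
  finally show ?thesis by (simp add: mult.commute)
next
  case False
  then show ?thesis using assms(3) by (simp add: not_integrable_integral_eq)
qed

lemma sint_bound:
  fixes f :: "'b \<Rightarrow> real"
  assumes "\<And>x. x \<in> topspace X \<Longrightarrow> \<bar>f x\<bar> \<le> B" "0 \<le> B"
  shows "\<bar>sint X \<nu> f\<bar> \<le> B * (measure (jordan_pos X \<nu>) (topspace X) + measure (jordan_neg X \<nu>) (topspace X))"
proof -
  have "\<bar>integral\<^sup>L (jordan_pos X \<nu>) f\<bar> \<le> B * measure (jordan_pos X \<nu>) (topspace X)"
    using int_bound[OF jp_finite[of X \<nu>], of f B] assms by simp
  moreover have "\<bar>integral\<^sup>L (jordan_neg X \<nu>) f\<bar> \<le> B * measure (jordan_neg X \<nu>) (topspace X)"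
    using int_bound[OF jn_finite[of X \<nu>], of f B] assms by simp
  ultimately show ?thesis unfolding sint_def by (simp add: distrib_left)
qed

lemma cont_meas:
  assumes "continuous_map X euclideanreal f"
  shows "f \<in> borel_measurable (BM X)"
proof (rule borel_measurableI)
  fix S :: "real set" assume "open S"
  then have "openin X {x \<in> topspace X. f x \<in> S}"
    using openin_continuous_map_preimage[OF assms] by simp
  moreover have "f -` S \<inter> space (BM X) = {x \<in> topspace X. f x \<in> S}" by auto
  ultimately show "f -` S \<inter> space (BM X) \<in> sets (BM X)" by (simp add: borel_open)
qed

lemma CK_bounded:
  assumes "compact_space X" "f \<in> CK X"
  shows "\<exists>B\<ge>0. \<forall>x\<in>topspace X. \<bar>f x\<bar> \<le> B"
proof -
  have "compactin euclideanreal (f ` topspace X)"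
    using image_compactin[of X "topspace X" euclideanreal f] assms
    by (simp add: CK_def compact_space_def)
  then have "bounded (f ` topspace X)" by (simp add: compact_imp_bounded)
  then obtain B where "\<forall>y\<in>f ` topspace X. norm y \<le> B" by (auto simp: bounded_iff)
  then show ?thesis by (intro exI[of _ "max B 0"]) auto
qed


lemma int_le_ind:
  fixes g :: "'b \<Rightarrow> real"
  assumes fm: "finite_measure M" and sM: "sets M = borel_sets X" and D: "D \<in> borel_sets X"
    and g: "g \<in> borel_measurable (BM X)"
    and le: "\<And>x. x \<in> topspace X \<Longrightarrow> \<bar>g x\<bar> \<le> indicator D x"
  shows "\<bar>integral\<^sup>L M g\<bar> \<le> measure M D"
proof -
  have sp: "space M = topspace X" using space_eq_top[OF sM] .
  have ig: "integrable M g"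
  proof (rule intg_bnd[OF fm sM g, of 1])
    fix x assume "x \<in> topspace X"
    then have "\<bar>g x\<bar> \<le> indicator D x" by (rule le)
    also have "\<dots> \<le> 1" by (simp add: indicator_def)
    finally show "\<bar>g x\<bar> \<le> 1" .
  qed
  have iD: "integrable M (indicator D :: 'b \<Rightarrow> real)"
    by (rule intg_bnd[OF fm sM, of _ 1]) (auto simp: indicator_def intro!: borel_measurable_indicator D)
  have "\<bar>integral\<^sup>L M g\<bar> \<le> (\<integral>x. \<bar>g x\<bar> \<partial>M)" by (rule integral_abs_bound)
  also have "\<dots> \<le> integral\<^sup>L M (indicator D)"
    by (rule integral_mono) (use ig iD le sp in auto)
  also have "\<dots> = measure M D" using borel_sub[OF D] sp by (simp add: Int_absorb2)
  finally show ?thesis .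
qed

lemma approx_sint:
  fixes f :: "'b \<Rightarrow> real"
  assumes sm: "signed_measure X \<nu>" and H: "Hausdorff_space X"
    and A: "A \<in> borel_sets X" and C: "compactin X C" "C \<subseteq> A" and U: "openin X U" "A \<subseteq> U"
    and fc: "continuous_map X euclideanreal f"
    and f01: "\<And>x. x \<in> topspace X \<Longrightarrow> 0 \<le> f x \<and> f x \<le> 1"
    and f1: "\<And>x. x \<in> C \<Longrightarrow> f x = 1" and f0: "\<And>x. x \<in> topspace X - U \<Longrightarrow> f x = 0"
  shows "\<bar>sint X \<nu> f - \<nu> A\<bar> \<le> variation X \<nu> (U - C)"
proof -
  define P where "P = jordan_pos X \<nu>"
  define N where "N = jordan_neg X \<nu>"
  have Cb: "C \<in> borel_sets X" using compactin_imp_closedin[OF H C(1)] borel_closed by blast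
  have D: "U - C \<in> borel_sets X" using borel_Diff[OF borel_open[OF U(1)] Cb] .
  define g where "g x = f x - indicator A x" for x
  have fm: "f \<in> borel_measurable (BM X)" by (rule cont_meas[OF fc])
  have Am: "(indicator A :: 'b \<Rightarrow> real) \<in> borel_measurable (BM X)"
    by (rule borel_measurable_indicator) (simp add: A)
  have gm: "g \<in> borel_measurable (BM X)" unfolding g_def using fm Am by simp
  have gle: "\<bar>g x\<bar> \<le> indicator (U - C) x" if x: "x \<in> topspace X" for x
  proof -
    consider "x \<in> C" | "x \<notin> U" | "x \<in> U - C" by blast
    then show ?thesis
    proof cases
      case 1 then show ?thesis using f1 C(2) by (simp add: g_def indicator_def subset_iff)
    next
      case 2 then show ?thesis using f0 x U(2) by (auto simp: g_def indicator_def)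
    next
      case 3 then show ?thesis using f01[OF x] by (auto simp: g_def indicator_def)
    qed
  qed
  have intf: "integrable M f" if "finite_measure M" "sets M = borel_sets X" for M
    by (rule intg_bnd[OF that fm, of 1]) (use f01 in force)
  have intA: "integrable M (indicator A :: 'b \<Rightarrow> real)" if "finite_measure M" "sets M = borel_sets X" for M
    by (rule intg_bnd[OF that Am, of 1]) (auto simp: indicator_def)
  have iP: "integral\<^sup>L P g = integral\<^sup>L P f - measure P A"
  proof -
    have "integral\<^sup>L P g = integral\<^sup>L P f - integral\<^sup>L P (indicator A)"
      unfolding g_def by (rule Bochner_Integration.integral_diff)
        (simp_all add: P_def intf[OF jp_finite jp_sets] intA[OF jp_finite jp_sets])
    then show ?thesis using borel_sub[OF A] by (simp add: P_def Int_absorb2)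
  qed
  have iN: "integral\<^sup>L N g = integral\<^sup>L N f - measure N A"
  proof -
    have "integral\<^sup>L N g = integral\<^sup>L N f - integral\<^sup>L N (indicator A)"
      unfolding g_def by (rule Bochner_Integration.integral_diff)
        (simp_all add: N_def intf[OF jn_finite jn_sets] intA[OF jn_finite jn_sets])
    then show ?thesis using borel_sub[OF A] by (simp add: N_def Int_absorb2)
  qed
  have bP: "\<bar>integral\<^sup>L P g\<bar> \<le> measure P (U - C)"
    unfolding P_def by (rule int_le_ind[OF jp_finite jp_sets D gm gle])
  have bN: "\<bar>integral\<^sup>L N g\<bar> \<le> measure N (U - C)"
    unfolding N_def by (rule int_le_ind[OF jn_finite jn_sets D gm gle])
  have "sint X \<nu> f - \<nu> A = integral\<^sup>L P g - integral\<^sup>L N g"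
    using iP iN jpn_diff[OF sm A] unfolding sint_def P_def N_def by simp
  then have "\<bar>sint X \<nu> f - \<nu> A\<bar> \<le> measure P (U - C) + measure N (U - C)" using bP bN by linarith
  also have "\<dots> = variation X \<nu> (U - C)" unfolding P_def N_def by (rule jpn_sum[OF sm D])
  finally show ?thesis .
qed

lemma Mreg_sm: "\<nu> \<in> Mreg X \<Longrightarrow> signed_measure X \<nu>"
  by (simp add: Mreg_def)

lemma sint_unique:
  assumes X: "compact_space X" "Hausdorff_space X"
    and m1: "\<nu>1 \<in> Mreg X" and m2: "\<nu>2 \<in> Mreg X"
    and eq: "\<And>f. f \<in> CK X \<Longrightarrow> sint X \<nu>1 f = sint X \<nu>2 f"
  shows "\<nu>1 = \<nu>2"
proof
  fix A
  show "\<nu>1 A = \<nu>2 A"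
  proof (cases "A \<in> borel_sets X")
    case False
    then show ?thesis using m1 m2 by (simp add: Mreg_def signed_measure_def)
  next
    case A: True
    have sm1: "signed_measure X \<nu>1" and sm2: "signed_measure X \<nu>2" using m1 m2 by (simp_all add: Mreg_def)
    have r1: "regular_sm X \<nu>1" and r2: "regular_sm X \<nu>2" using m1 m2 by (simp_all add: Mreg_def)
    have ns: "normal_space X" using X compact_Hausdorff_or_regular_imp_normal_space by blast
    have key: "\<bar>\<nu>1 A - \<nu>2 A\<bar> \<le> 2 * e" if e: "0 < e" for e
    proof -
      obtain C1 U1 where c1: "compactin X C1" "openin X U1" "C1 \<subseteq> A" "A \<subseteq> U1" "variation X \<nu>1 (U1 - C1) < e"
        using r1 A e unfolding regular_sm_def by meson
      obtain C2 U2 where c2: "compactin X C2" "openin X U2" "C2 \<subseteq> A" "A \<subseteq> U2" "variation X \<nu>2 (U2 - C2) < e"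
        using r2 A e unfolding regular_sm_def by meson
      define C where "C = C1 \<union> C2"
      define U where "U = U1 \<inter> U2"
      have C: "compactin X C" "C \<subseteq> A" using c1 c2 compactin_Un by (auto simp: C_def)
      have U: "openin X U" "A \<subseteq> U" using c1 c2 by (auto simp: U_def)
      have Cc: "closedin X C" using compactin_imp_closedin[OF X(2) C(1)] .
      have Cb: "C \<in> borel_sets X" "C1 \<in> borel_sets X" "C2 \<in> borel_sets X"
        using Cc compactin_imp_closedin[OF X(2) c1(1)] compactin_imp_closedin[OF X(2) c2(1)]
        by (auto intro: borel_closed)
      have Db: "U - C \<in> borel_sets X" "U1 - C1 \<in> borel_sets X" "U2 - C2 \<in> borel_sets X"
        using Cb U c1 c2 by (meson borel_Diff borel_open)+
      have s1: "U - C \<subseteq> U1 - C1" "U - C \<subseteq> U2 - C2" by (auto simp: U_def C_def)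
      have v1: "variation X \<nu>1 (U - C) < e"
        using var_mono[OF sm1 Db(1) Db(2) s1(1)] c1(5) by linarith
      have v2: "variation X \<nu>2 (U - C) < e"
        using var_mono[OF sm2 Db(1) Db(3) s1(2)] c2(5) by linarith
      have cl2: "closedin X (topspace X - U)" using U(1) by blast
      have dj: "disjnt (topspace X - U) C" using C U by (auto simp: disjnt_def)
      obtain f where f: "continuous_map X (top_of_set {0..1::real}) f"
          "f ` (topspace X - U) \<subseteq> {0}" "f ` C \<subseteq> {1}"
        using Urysohn_lemma[OF ns cl2 Cc dj, of 0 1] by auto
      have fc: "continuous_map X euclideanreal f" using f(1) continuous_map_in_subtopology by blast
      have f01: "0 \<le> f x \<and> f x \<le> 1" if "x \<in> topspace X" for x
        using f(1) that unfolding continuous_map_def by auto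
      have f1: "f x = 1" if "x \<in> C" for x using f(3) that by auto
      have f0: "f x = 0" if "x \<in> topspace X - U" for x using f(2) that by auto
      have a1: "\<bar>sint X \<nu>1 f - \<nu>1 A\<bar> \<le> variation X \<nu>1 (U - C)"
        by (rule approx_sint[OF sm1 X(2) A C U fc f01 f1 f0])
      have a2: "\<bar>sint X \<nu>2 f - \<nu>2 A\<bar> \<le> variation X \<nu>2 (U - C)"
        by (rule approx_sint[OF sm2 X(2) A C U fc f01 f1 f0])
      have "sint X \<nu>1 f = sint X \<nu>2 f" using eq fc by (simp add: CK_def)
      then show ?thesis using a1 a2 v1 v2 by linarith
    qed
    have "\<bar>\<nu>1 A - \<nu>2 A\<bar> \<le> 0"
    proof (rule field_le_epsilon)
      fix e :: real assume "0 < e"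
      then have "\<bar>\<nu>1 A - \<nu>2 A\<bar> \<le> 2 * (e/2)" using key[of "e/2"] by simp
      then show "\<bar>\<nu>1 A - \<nu>2 A\<bar> \<le> 0 + e" by simp
    qed
    then show ?thesis by simp
  qed
qed


definition pre :: "'b topology \<Rightarrow> ('b \<Rightarrow> 'b) \<Rightarrow> 'b set \<Rightarrow> 'b set" where
  "pre X \<phi> A = {x \<in> topspace X. \<phi> x \<in> A}"

definition psf :: "'b topology \<Rightarrow> ('b \<Rightarrow> 'b) \<Rightarrow> ('b set \<Rightarrow> real) \<Rightarrow> 'b set \<Rightarrow> real" where
  "psf X \<phi> \<mu> = (\<lambda>A. if A \<in> borel_sets X then \<mu> (pre X \<phi> A) else 0)"

lemma cont_measurable:
  assumes c: "continuous_map X X \<phi>"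
  shows "\<phi> \<in> measurable (BM X) (BM X)"
proof -
  have op: "{U. openin X U} \<subseteq> Pow (topspace X)" using openin_subset by blast
  have "\<phi> \<in> measurable (BM X) (measure_of (topspace X) {U. openin X U} (\<lambda>_. 0))"
  proof (rule measurable_measure_of[OF op])
    show "\<phi> \<in> space (BM X) \<rightarrow> topspace X" using c by (auto simp: continuous_map_def)
    fix y assume "y \<in> {U. openin X U}"
    then have "openin X {x \<in> topspace X. \<phi> x \<in> y}" using c by (simp add: continuous_map_def)
    moreover have "\<phi> -` y \<inter> space (BM X) = {x \<in> topspace X. \<phi> x \<in> y}" by auto
    ultimately show "\<phi> -` y \<inter> space (BM X) \<in> sets (BM X)" by (simp add: borel_open)
  qed
  moreover have "sets (measure_of (topspace X) {U. openin X U} (\<lambda>_. 0)) = sets (BM X)"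
    by (simp add: sets_measure_of[OF op] borel_sets_def)
  ultimately show ?thesis using measurable_cong_sets[of "BM X" "BM X"] by metis
qed

lemma pre_borel:
  assumes c: "continuous_map X X \<phi>" and A: "A \<in> borel_sets X"
  shows "pre X \<phi> A \<in> borel_sets X"
proof -
  have "\<phi> -` A \<inter> space (BM X) \<in> sets (BM X)"
    by (rule measurable_sets[OF cont_measurable[OF c]]) (simp add: A)
  moreover have "\<phi> -` A \<inter> space (BM X) = pre X \<phi> A" by (auto simp: pre_def)
  ultimately show ?thesis by simp
qed

lemma psf_sm:
  assumes sm: "signed_measure X \<mu>" and c: "continuous_map X X \<phi>"
  shows "signed_measure X (psf X \<phi> \<mu>)"
  unfolding signed_measure_def
proof (intro conjI allI impI)
  show "A \<notin> borel_sets X \<Longrightarrow> psf X \<phi> \<mu> A = 0" for A by (simp add: psf_def)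
  show "psf X \<phi> \<mu> {} = 0" using sm_empty[OF sm] by (simp add: psf_def borel_empty pre_def)
  fix A :: "nat \<Rightarrow> _" assume r: "range A \<subseteq> borel_sets X" and d: "disjoint_family A"
  have r2: "range (\<lambda>n. pre X \<phi> (A n)) \<subseteq> borel_sets X" using r pre_borel[OF c] by blast
  have d2: "disjoint_family (\<lambda>n. pre X \<phi> (A n))"
    using d unfolding disjoint_family_on_def pre_def by blast
  have "(\<lambda>n. \<mu> (pre X \<phi> (A n))) sums \<mu> (\<Union>n. pre X \<phi> (A n))"
    using sm r2 d2 unfolding signed_measure_def by blast
  moreover have "(\<Union>n. pre X \<phi> (A n)) = pre X \<phi> (\<Union>n. A n)" by (auto simp: pre_def)
  moreover have "(\<Union>n. A n) \<in> borel_sets X" using r by (rule borel_UN)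
  ultimately show "(\<lambda>n. psf X \<phi> \<mu> (A n)) sums psf X \<phi> \<mu> (\<Union>n. A n)"
    using r by (simp add: psf_def range_subsetD)
qed

lemma psf_var:
  assumes sm: "signed_measure X \<mu>" and c: "continuous_map X X \<phi>" and A: "A \<in> borel_sets X"
  shows "variation X (psf X \<phi> \<mu>) A \<le> variation X \<mu> (pre X \<phi> A)"
proof -
  have pA: "pre X \<phi> A \<in> borel_sets X" by (rule pre_borel[OF c A])
  have smp: "signed_measure X (psf X \<phi> \<mu>)" by (rule psf_sm[OF sm c])
  have prem: "pre X \<phi> B \<subseteq> pre X \<phi> A" if "B \<subseteq> A" for B using that by (auto simp: pre_def)
  have 1: "Pv X (psf X \<phi> \<mu>) A \<le> Pv X \<mu> (pre X \<phi> A)"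
  proof (rule Pv_least)
    fix B assume B: "B \<in> borel_sets X" "B \<subseteq> A"
    then show "psf X \<phi> \<mu> B \<le> Pv X \<mu> (pre X \<phi> A)"
      using Pv_upper[OF sm pre_borel[OF c B(1)] prem[OF B(2)]] by (simp add: psf_def)
  qed
  have 2: "Pv X (\<lambda>B. - psf X \<phi> \<mu> B) A \<le> Pv X (\<lambda>B. - \<mu> B) (pre X \<phi> A)"
  proof (rule Pv_least)
    fix B assume B: "B \<in> borel_sets X" "B \<subseteq> A"
    then show "- psf X \<phi> \<mu> B \<le> Pv X (\<lambda>B. - \<mu> B) (pre X \<phi> A)"
      using Pv_upper[OF sm_neg[OF sm] pre_borel[OF c B(1)] prem[OF B(2)]] by (simp add: psf_def)
  qed
  show ?thesis using 1 2 var_eq2[OF smp A] var_eq2[OF sm pA] by simp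
qed

lemma psf_regular:
  assumes H: "Hausdorff_space X" and m: "\<mu> \<in> Mreg X" and c: "continuous_map X X \<phi>"
  shows "regular_sm X (psf X \<phi> \<mu>)"
  unfolding regular_sm_def
proof (intro ballI allI impI)
  fix A and e :: real assume A: "A \<in> borel_sets X" and e: "0 < e"
  have sm: "signed_measure X \<mu>" and r: "regular_sm X \<mu>" using m by (simp_all add: Mreg_def)
  have pA: "pre X \<phi> A \<in> borel_sets X" by (rule pre_borel[OF c A])
  have cA: "topspace X - A \<in> borel_sets X" using borel_Diff[OF borel_top A] .
  have pcA: "pre X \<phi> (topspace X - A) \<in> borel_sets X" by (rule pre_borel[OF c cA])
  obtain C1 U1 where c1: "compactin X C1" "openin X U1" "C1 \<subseteq> pre X \<phi> A" "pre X \<phi> A \<subseteq> U1"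
      "variation X \<mu> (U1 - C1) < e/2"
    using r pA e unfolding regular_sm_def by (meson half_gt_zero)
  obtain C2 U2 where c2: "compactin X C2" "openin X U2" "C2 \<subseteq> pre X \<phi> (topspace X - A)"
      "pre X \<phi> (topspace X - A) \<subseteq> U2" "variation X \<mu> (U2 - C2) < e/2"
    using r pcA e unfolding regular_sm_def by (meson half_gt_zero)
  define C where "C = \<phi> ` C1"
  define U where "U = topspace X - \<phi> ` C2"
  have Cc: "compactin X C" unfolding C_def by (rule image_compactin[OF c1(1) c])
  have C2c: "compactin X (\<phi> ` C2)" by (rule image_compactin[OF c2(1) c])
  have Uo: "openin X U" unfolding U_def using compactin_imp_closedin[OF H C2c] by blast
  have CA: "C \<subseteq> A" using c1(3) by (auto simp: C_def pre_def)
  have AU: "A \<subseteq> U" using c2(3) borel_sub[OF A] by (auto simp: U_def pre_def)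
  have Cb: "C \<in> borel_sets X" using compactin_imp_closedin[OF H Cc] borel_closed by blast
  have Db: "U - C \<in> borel_sets X" using borel_Diff[OF borel_open[OF Uo] Cb] .
  have b1: "U1 - C1 \<in> borel_sets X" "U2 - C2 \<in> borel_sets X"
    using c1 c2 compactin_imp_closedin[OF H] borel_closed borel_open borel_Diff by meson+
  have sub: "pre X \<phi> (U - C) \<subseteq> (U1 - C1) \<union> (U2 - C2)"
  proof
    fix y assume y: "y \<in> pre X \<phi> (U - C)"
    then have y1: "y \<in> topspace X" "\<phi> y \<notin> \<phi> ` C1" "\<phi> y \<notin> \<phi> ` C2"
      by (auto simp: pre_def U_def C_def)
    then have "y \<notin> C1" "y \<notin> C2" by auto
    moreover have "\<phi> y \<in> topspace X" using c y1(1) unfolding continuous_map_def by blast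
    then have "y \<in> U1 \<or> y \<in> U2" using c1(4) c2(4) y1(1) by (auto simp: pre_def)
    ultimately show "y \<in> (U1 - C1) \<union> (U2 - C2)" by blast
  qed
  have "variation X (psf X \<phi> \<mu>) (U - C) \<le> variation X \<mu> (pre X \<phi> (U - C))"
    by (rule psf_var[OF sm c Db])
  also have "\<dots> \<le> variation X \<mu> ((U1 - C1) \<union> (U2 - C2))"
    by (rule var_mono[OF sm pre_borel[OF c Db] borel_Un[OF b1] sub])
  also have "\<dots> \<le> variation X \<mu> (U1 - C1) + variation X \<mu> (U2 - C2)"
    by (rule var_Un_le[OF sm b1])
  finally have "variation X (psf X \<phi> \<mu>) (U - C) < e" using c1(5) c2(5) by linarith
  then show "\<exists>C U. compactin X C \<and> openin X U \<and> C \<subseteq> A \<and> A \<subseteq> U \<and> variation X (psf X \<phi> \<mu>) (U - C) < e"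
    using Cc Uo CA AU by blast
qed

lemma psf_sint:
  fixes f :: "'b \<Rightarrow> real"
  assumes sm: "signed_measure X \<mu>" and c: "continuous_map X X \<phi>"
    and f: "f \<in> borel_measurable (BM X)" "\<And>x. x \<in> topspace X \<Longrightarrow> \<bar>f x\<bar> \<le> B"
  shows "sint X (psf X \<phi> \<mu>) f = sint X \<mu> (f \<circ> \<phi>)"
proof -
  have mP: "\<phi> \<in> measurable (jordan_pos X \<mu>) (BM X)"
    using cont_measurable[OF c] measurable_cong_sets[of "jordan_pos X \<mu>" "BM X" "BM X" "BM X"] by simp
  have mN: "\<phi> \<in> measurable (jordan_neg X \<mu>) (BM X)"
    using cont_measurable[OF c] measurable_cong_sets[of "jordan_neg X \<mu>" "BM X" "BM X" "BM X"] by simp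
  define M where "M i = distr (jordan_pos X \<mu>) (BM X) \<phi>" for i :: nat
  define N where "N i = distr (jordan_neg X \<mu>) (BM X) \<phi>" for i :: nat
  have fP: "finite_measure (M i)" for i
    unfolding M_def using finite_measure.finite_measure_distr[OF jp_finite mP] .
  have fN: "finite_measure (N i)" for i
    unfolding N_def using finite_measure.finite_measure_distr[OF jn_finite mN] .
  have "sint X (psf X \<phi> \<mu>) f + (\<Sum>j<1. 1 * integral\<^sup>L (N j) f) = (\<Sum>i<1. 1 * integral\<^sup>L (M i) f)"
  proof (rule sint_repr[OF psf_sm[OF sm c] _ fP _ _ fN _ _ f])
    show "sets (M i) = borel_sets X" "sets (N i) = borel_sets X" for i by (simp_all add: M_def N_def)
    fix A assume A: "A \<in> borel_sets X"
    have pA: "pre X \<phi> A \<in> borel_sets X" by (rule pre_borel[OF c A])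
    have e3: "pre X \<phi> A = \<phi> -` A \<inter> topspace X" by (auto simp: pre_def)
    show "psf X \<phi> \<mu> A + (\<Sum>j<1. 1 * measure (N j) A) = (\<Sum>i<1. 1 * measure (M i) A)"
      using measure_distr[OF mP, of A] measure_distr[OF mN, of A] A jpn_diff[OF sm pA]
      by (simp add: M_def N_def e3 psf_def)
  qed auto
  moreover have "integral\<^sup>L (M i) f = integral\<^sup>L (jordan_pos X \<mu>) (f \<circ> \<phi>)" for i
    unfolding M_def using integral_distr[OF mP f(1)] by (simp add: comp_def)
  moreover have "integral\<^sup>L (N i) f = integral\<^sup>L (jordan_neg X \<mu>) (f \<circ> \<phi>)" for i
    unfolding N_def using integral_distr[OF mN f(1)] by (simp add: comp_def)
  ultimately have "sint X (psf X \<phi> \<mu>) f + integral\<^sup>L (jordan_neg X \<mu>) (f \<circ> \<phi>)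
      = integral\<^sup>L (jordan_pos X \<mu>) (f \<circ> \<phi>)" by simp
  then show ?thesis unfolding sint_def[of X \<mu>] by linarith
qed

lemma adj_eq:
  assumes X: "compact_space X" "Hausdorff_space X" and c: "continuous_map X X \<phi>"
    and m: "\<mu> \<in> Mreg X"
  shows "adj X (\<lambda>f. f \<circ> \<phi>) \<mu> = psf X \<phi> \<mu>"
proof -
  have sm: "signed_measure X \<mu>" using m by (simp add: Mreg_def)
  have P: "psf X \<phi> \<mu> \<in> Mreg X \<and> (\<forall>f\<in>CK X. sint X (psf X \<phi> \<mu>) f = sint X \<mu> (f \<circ> \<phi>))"
  proof
    show "psf X \<phi> \<mu> \<in> Mreg X"
      using psf_sm[OF sm c] psf_regular[OF X(2) m c] by (simp add: Mreg_def)
    show "\<forall>f\<in>CK X. sint X (psf X \<phi> \<mu>) f = sint X \<mu> (f \<circ> \<phi>)"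
    proof
      fix f assume f: "f \<in> CK X"
      obtain B where B: "\<forall>x\<in>topspace X. \<bar>f x\<bar> \<le> B" using CK_bounded[OF X(1) f] by blast
      show "sint X (psf X \<phi> \<mu>) f = sint X \<mu> (f \<circ> \<phi>)"
        by (rule psf_sint[OF sm c cont_meas]) (use f B in \<open>auto simp: CK_def\<close>)
    qed
  qed
  show ?thesis unfolding adj_def
  proof (rule the1_equality)
    show "\<exists>!\<nu>. \<nu> \<in> Mreg X \<and> (\<forall>f\<in>CK X. sint X \<nu> f = sint X \<mu> (f \<circ> \<phi>))"
    proof (rule ex1I[of _ "psf X \<phi> \<mu>"])
      show "psf X \<phi> \<mu> \<in> Mreg X \<and> (\<forall>f\<in>CK X. sint X (psf X \<phi> \<mu>) f = sint X \<mu> (f \<circ> \<phi>))" by (rule P)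
      fix \<nu> assume "\<nu> \<in> Mreg X \<and> (\<forall>f\<in>CK X. sint X \<nu> f = sint X \<mu> (f \<circ> \<phi>))"
      then show "\<nu> = psf X \<phi> \<mu>" using P sint_unique[OF X, of \<nu> "psf X \<phi> \<mu>"] by auto
    qed
    show "psf X \<phi> \<mu> \<in> Mreg X \<and> (\<forall>f\<in>CK X. sint X (psf X \<phi> \<mu>) f = sint X \<mu> (f \<circ> \<phi>))" by (rule P)
  qed
qed

lemma Pv_dsf:
  assumes A: "A \<in> borel_sets X"
  shows "Pv X (dsf X a) A = indicator A a"
proof (rule antisym)
  show "Pv X (dsf X a) A \<le> indicator A a"
    by (rule Pv_least) (auto simp: dsf_def indicator_def)
  show "indicator A a \<le> Pv X (dsf X a) A"
    using Pv_upper[OF dsf_sm A, of A a] A by (simp add: dsf_def)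
qed

lemma var_dsf:
  assumes A: "A \<in> borel_sets X"
  shows "variation X (dsf X a) A = indicator A a"
  using var_eq[OF dsf_sm A] Pv_dsf[OF A] A by (simp add: dsf_def)

lemma dsf_Mreg:
  assumes H: "Hausdorff_space X" and a: "a \<in> topspace X"
  shows "dsf X a \<in> Mreg X"
  unfolding Mreg_def regular_sm_def
proof (intro CollectI conjI dsf_sm ballI allI impI)
  fix A and e :: real assume A: "A \<in> borel_sets X" and e: "0 < e"
  have ca: "compactin X {a}" using a by (simp add: finite_imp_compactin)
  have cla: "closedin X {a}" by (rule compactin_imp_closedin[OF H ca])
  have oa: "openin X (topspace X - {a})" using cla by blast
  have ba: "topspace X - {a} \<in> borel_sets X" using borel_open[OF oa] .
  show "\<exists>C U. compactin X C \<and> openin X U \<and> C \<subseteq> A \<and> A \<subseteq> U \<and> variation X (dsf X a) (U - C) < e"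
  proof (cases "a \<in> A")
    case True
    have "variation X (dsf X a) (topspace X - {a}) = 0" using var_dsf[OF ba] by simp
    then show ?thesis using True ca e borel_sub[OF A]
      by (intro exI[of _ "{a}"] exI[of _ "topspace X"]) auto
  next
    case False
    have "variation X (dsf X a) (topspace X - {a}) = 0" using var_dsf[OF ba] by simp
    then show ?thesis using False oa e borel_sub[OF A]
      by (intro exI[of _ "{}"] exI[of _ "topspace X - {a}"]) auto
  qed
qed

lemma psf_dsf:
  assumes c: "continuous_map X X \<phi>" and a: "a \<in> topspace X"
  shows "psf X \<phi> (dsf X a) = dsf X (\<phi> a)"
proof
  fix A show "psf X \<phi> (dsf X a) A = dsf X (\<phi> a) A"
    using pre_borel[OF c] a by (auto simp: psf_def dsf_def pre_def indicator_def)
qed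

lemma tv_dsf: "tv_norm X (dsf X a) = indicator (topspace X) a"
  unfolding tv_norm_def by (rule var_dsf[OF borel_top])


definition fab :: "'b topology \<Rightarrow> ('b set \<Rightarrow> real) \<Rightarrow> real \<Rightarrow> bool" where
  "fab X \<nu> K \<longleftrightarrow> \<nu> {} = 0 \<and>
     (\<forall>A\<in>borel_sets X. \<forall>B\<in>borel_sets X. A \<inter> B = {} \<longrightarrow> \<nu> (A \<union> B) = \<nu> A + \<nu> B) \<and>
     (\<forall>A\<in>borel_sets X. \<bar>\<nu> A\<bar> \<le> K)"

lemma fab_fin_add:
  assumes fa: "fab X \<nu> K"
  shows "finite Q \<Longrightarrow> Q \<subseteq> borel_sets X \<Longrightarrow> disjoint Q \<Longrightarrow> \<nu> (\<Union>Q) = (\<Sum>B\<in>Q. \<nu> B)"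
proof (induction Q rule: finite_induct)
  case empty then show ?case using fa by (simp add: fab_def)
next
  case (insert B Q)
  have dd: "B \<inter> \<Union>Q = {}" "disjoint Q" using disjoint_insertD[OF insert(5) insert(2)] by auto
  have b1: "\<Union>Q \<in> borel_sets X" using insert(1,4) by (intro borel_finite_Union) auto
  have b2: "B \<in> borel_sets X" using insert(4) by auto
  have "\<nu> (\<Union>(insert B Q)) = \<nu> B + \<nu> (\<Union>Q)" using fa b1 b2 dd(1) unfolding fab_def by simp
  also have "\<nu> (\<Union>Q) = (\<Sum>B\<in>Q. \<nu> B)" using insert(3,4) dd(2) by auto
  finally show ?case using insert(1,2) by simp
qed

lemma fab_part_le:
  assumes fa: "fab X \<nu> K" and P: "finite P" "P \<subseteq> borel_sets X" "disjoint P"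
  shows "(\<Sum>B\<in>P. \<bar>\<nu> B\<bar>) \<le> 2 * K"
proof -
  define Q where "Q = {B\<in>P. 0 \<le> \<nu> B}"
  define R where "R = P - Q"
  have QR: "finite Q" "finite R" "Q \<subseteq> P" "R \<subseteq> P" "Q \<inter> R = {}" "P = Q \<union> R"
    using P(1) by (auto simp: Q_def R_def)
  have dQ: "disjoint Q" using P(3) QR(3) by (rule pairwise_subset)
  have dR: "disjoint R" using P(3) QR(4) by (rule pairwise_subset)
  have s1: "(\<Sum>B\<in>P. \<bar>\<nu> B\<bar>) = (\<Sum>B\<in>Q. \<bar>\<nu> B\<bar>) + (\<Sum>B\<in>R. \<bar>\<nu> B\<bar>)"
    using QR(1,2,5,6) sum.union_disjoint by metis
  have s2: "(\<Sum>B\<in>Q. \<bar>\<nu> B\<bar>) = (\<Sum>B\<in>Q. \<nu> B)"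
    by (rule sum.cong) (auto simp: Q_def)
  have s3: "(\<Sum>B\<in>R. \<bar>\<nu> B\<bar>) = - (\<Sum>B\<in>R. \<nu> B)"
    unfolding sum_negf[symmetric] by (rule sum.cong) (auto simp: Q_def R_def)
  have bQ: "\<Union>Q \<in> borel_sets X" using QR(1,3) P(2) by (intro borel_finite_Union) auto
  have bR: "\<Union>R \<in> borel_sets X" using QR(2,4) P(2) by (intro borel_finite_Union) auto
  have s4: "(\<Sum>B\<in>Q. \<nu> B) = \<nu> (\<Union>Q)"
    using QR(1,3) P(2) dQ by (intro fab_fin_add[OF fa, symmetric]) auto
  have s5: "(\<Sum>B\<in>R. \<nu> B) = \<nu> (\<Union>R)"
    using QR(2,4) P(2) dR by (intro fab_fin_add[OF fa, symmetric]) auto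
  have "\<bar>\<nu> (\<Union>Q)\<bar> \<le> K" "\<bar>\<nu> (\<Union>R)\<bar> \<le> K" using fa bQ bR by (auto simp: fab_def)
  then show ?thesis using s1 s2 s3 s4 s5 by linarith
qed

lemma fab_var_le:
  assumes fa: "fab X \<nu> K" and A: "A \<in> borel_sets X"
  shows "variation X \<nu> A \<le> 2 * K"
  unfolding variation_def
  by (rule cSup_least) (use A fab_part_le[OF fa] in \<open>auto intro!: exI[of _ "{A}"] simp: disjoint_def\<close>)

lemma fab_var_ge:
  assumes fa: "fab X \<nu> K" and p: "{p} \<in> borel_sets X" "p \<in> topspace X"
  shows "\<bar>\<nu> {p}\<bar> \<le> variation X \<nu> (topspace X)"
proof -
  let ?S = "{\<Sum>B\<in>P. \<bar>\<nu> B\<bar> |P. finite P \<and> P \<subseteq> borel_sets X \<and> disjoint P \<and> \<Union>P = topspace X}"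
  have b: "topspace X - {p} \<in> borel_sets X" using borel_Diff[OF borel_top p(1)] .
  have ne: "{p} \<noteq> topspace X - {p}" by auto
  have mem: "\<bar>\<nu> {p}\<bar> + \<bar>\<nu> (topspace X - {p})\<bar> \<in> ?S"
    using p b ne by (intro CollectI exI[of _ "{{p}, topspace X - {p}}"]) (auto simp: disjoint_def)
  have bdd: "bdd_above ?S" using fab_part_le[OF fa] unfolding bdd_above_def by blast
  have "\<bar>\<nu> {p}\<bar> + \<bar>\<nu> (topspace X - {p})\<bar> \<le> Sup ?S" by (rule cSup_upper[OF mem bdd])
  then show ?thesis unfolding variation_def by linarith
qed

lemma fab_points:
  assumes fa: "fab X \<nu> K" and F: "finite F" "\<And>p. p \<in> F \<Longrightarrow> {p} \<in> borel_sets X"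
  shows "(\<Sum>p\<in>F. \<bar>\<nu> {p}\<bar>) \<le> 2 * K"
proof -
  have "(\<Sum>B\<in>(\<lambda>p. {p}) ` F. \<bar>\<nu> B\<bar>) \<le> 2 * K"
    by (rule fab_part_le[OF fa]) (use F in \<open>auto simp: disjoint_def\<close>)
  moreover have "(\<Sum>B\<in>(\<lambda>p. {p}) ` F. \<bar>\<nu> B\<bar>) = (\<Sum>p\<in>F. \<bar>\<nu> {p}\<bar>)"
    by (rule sum.reindex_cong[where l="\<lambda>p. {p}"]) (auto simp: inj_on_def)
  ultimately show ?thesis by simp
qed

lemma fab_diff:
  assumes "fab X \<mu> K1" "fab X \<nu> K2"
  shows "fab X (\<lambda>A. \<mu> A - \<nu> A) (K1 + K2)"
  unfolding fab_def
proof (intro conjI ballI impI)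
  show "\<mu> {} - \<nu> {} = 0" using assms by (simp add: fab_def)
  fix A B assume "A \<in> borel_sets X" "B \<in> borel_sets X" "A \<inter> B = {}"
  then show "\<mu> (A \<union> B) - \<nu> (A \<union> B) = \<mu> A - \<nu> A + (\<mu> B - \<nu> B)" using assms by (simp add: fab_def)
next
  fix A assume "A \<in> borel_sets X"
  then have "\<bar>\<mu> A\<bar> \<le> K1" "\<bar>\<nu> A\<bar> \<le> K2" using assms by (auto simp: fab_def)
  then show "\<bar>\<mu> A - \<nu> A\<bar> \<le> K1 + K2" by linarith
qed

lemma sm_fab: "signed_measure X \<nu> \<Longrightarrow> (\<forall>A\<in>borel_sets X. \<bar>\<nu> A\<bar> \<le> K) \<Longrightarrow> fab X \<nu> K"
  unfolding fab_def using sm_add sm_empty by blast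

lemma jp_measure_le:
  assumes fa: "fab X \<nu> K"
  shows "measure (jordan_pos X \<nu>) (topspace X) \<le> 3 * K / 2"
proof -
  have K: "0 \<le> K" using fa borel_empty unfolding fab_def by (meson abs_ge_zero order_trans)
  have v: "variation X \<nu> (topspace X) \<le> 2 * K" by (rule fab_var_le[OF fa borel_top])
  have n: "\<bar>\<nu> (topspace X)\<bar> \<le> K" using fa borel_top unfolding fab_def by blast
  have e: "emeasure (jordan_pos X \<nu>) (topspace X) =
      (if measure_space (topspace X) (borel_sets X) (\<lambda>A. ennreal ((variation X \<nu> A + \<nu> A) / 2))
       then ennreal ((variation X \<nu> (topspace X) + \<nu> (topspace X)) / 2) else 0)"
    unfolding jordan_pos_def emeasure_measure_of_conv sigma_sets_borel by (simp add: borel_top)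
  show ?thesis
  proof (cases "0 \<le> (variation X \<nu> (topspace X) + \<nu> (topspace X)) / 2")
    case True
    then show ?thesis using e v n K unfolding measure_def by (auto simp: abs_le_iff)
  next
    case False
    then show ?thesis using e K unfolding measure_def by (auto simp: ennreal_neg)
  qed
qed

lemma jn_measure_le:
  assumes fa: "fab X \<nu> K"
  shows "measure (jordan_neg X \<nu>) (topspace X) \<le> 3 * K / 2"
proof -
  have "fab X (\<lambda>A. - \<nu> A) K" using fa unfolding fab_def by auto
  then show ?thesis unfolding jn_eq by (rule jp_measure_le)
qed

lemma fab_sint_bound:
  fixes f :: "'b \<Rightarrow> real"
  assumes fa: "fab X \<nu> K" and f: "\<And>x. x \<in> topspace X \<Longrightarrow> \<bar>f x\<bar> \<le> B" "0 \<le> B"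
  shows "\<bar>sint X \<nu> f\<bar> \<le> B * (3 * K)"
proof -
  have "\<bar>sint X \<nu> f\<bar> \<le> B * (measure (jordan_pos X \<nu>) (topspace X) + measure (jordan_neg X \<nu>) (topspace X))"
    by (rule sint_bound[OF f])
  also have "\<dots> \<le> B * (3 * K / 2 + 3 * K / 2)"
    using jp_measure_le[OF fa] jn_measure_le[OF fa] f(2) by (intro mult_left_mono) auto
  finally show ?thesis by simp
qed

lemma bborel_meas: "bborel X g \<Longrightarrow> g \<in> borel_measurable (BM X)"
  unfolding bborel_def
proof (intro borel_measurableI)
  fix S :: "real set" assume "(\<forall>U. open U \<longrightarrow> {x \<in> topspace X. g x \<in> U} \<in> borel_sets X) \<and> (\<exists>B. \<forall>x\<in>topspace X. \<bar>g x\<bar> \<le> B)" "open S"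
  moreover have "g -` S \<inter> space (BM X) = {x \<in> topspace X. g x \<in> S}" by auto
  ultimately show "g -` S \<inter> space (BM X) \<in> sets (BM X)" by simp
qed

lemma bborel_bound: "bborel X g \<Longrightarrow> \<exists>B\<ge>0. \<forall>x\<in>topspace X. \<bar>g x\<bar> \<le> B"
  unfolding bborel_def by (meson abs_ge_zero dual_order.trans linorder_linear)

lemma md_meas:
  assumes g: "bborel X g" and A: "A \<in> borel_sets X"
  shows "(\<lambda>x. indicator A x * g x) \<in> borel_measurable (BM X)"
  using bborel_meas[OF g] A by (intro borel_measurable_times borel_measurable_indicator) auto

lemma md_dsf:
  assumes g: "bborel X g" and a: "a \<in> topspace X"
  shows "mult_dual X g (dsf X a) = (\<lambda>A. g a * dsf X a A)"
proof
  fix A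
  obtain B where B: "\<forall>x\<in>topspace X. \<bar>g x\<bar> \<le> B" using bborel_bound[OF g] by blast
  show "mult_dual X g (dsf X a) A = g a * dsf X a A"
  proof (cases "A \<in> borel_sets X")
    case True
    have "sint X (dsf X a) (\<lambda>x. indicator A x * g x) = indicator A a * g a"
      by (rule sint_dirac[OF a md_meas[OF g True], of B]) (use B in \<open>auto simp: indicator_def\<close>)
    then show ?thesis using True by (simp add: mult_dual_def dsf_def)
  next
    case False then show ?thesis by (simp add: mult_dual_def dsf_def)
  qed
qed

lemma md_fab:
  assumes g: "bborel X g" and B: "\<And>x. x \<in> topspace X \<Longrightarrow> \<bar>g x\<bar> \<le> Bg" "0 \<le> Bg"
    and m: "\<mu> \<in> Mreg X"
  shows "fab X (mult_dual X g \<mu>) (Bg * tv_norm X \<mu>)"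
  unfolding fab_def
proof (intro conjI ballI impI)
  have sm: "signed_measure X \<mu>" using m by (simp add: Mreg_def)
  let ?P = "jordan_pos X \<mu>" and ?N = "jordan_neg X \<mu>"
  have intg: "integrable M (\<lambda>x. indicator A x * g x)" if "A \<in> borel_sets X" "finite_measure M" "sets M = borel_sets X" for A M
    by (rule intg_bnd[OF that(2,3) md_meas[OF g that(1)], of Bg]) (use B in \<open>auto simp: indicator_def\<close>)
  show "mult_dual X g \<mu> {} = 0" by (simp add: mult_dual_def sint_def)
  fix A B' assume A: "A \<in> borel_sets X" and B': "B' \<in> borel_sets X" and d: "A \<inter> B' = {}"
  have AB: "A \<union> B' \<in> borel_sets X" using borel_Un[OF A B'] .
  have pt: "(\<lambda>x. indicator (A \<union> B') x * g x) = (\<lambda>x. indicator A x * g x + indicator B' x * g x)"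
  proof
    fix x show "indicator (A \<union> B') x * g x = indicator A x * g x + indicator B' x * g x"
      using d by (cases "x \<in> A"; cases "x \<in> B'") auto
  qed
  have ia: "integral\<^sup>L M (\<lambda>x. indicator (A \<union> B') x * g x) = integral\<^sup>L M (\<lambda>x. indicator A x * g x) + integral\<^sup>L M (\<lambda>x. indicator B' x * g x)"
    if "finite_measure M" "sets M = borel_sets X" for M
    unfolding pt by (rule Bochner_Integration.integral_add) (use intg A B' that in auto)
  note i1 = ia[OF jp_finite[of X \<mu>] jp_sets] and i2 = ia[OF jn_finite[of X \<mu>] jn_sets]
  then show "mult_dual X g \<mu> (A \<union> B') = mult_dual X g \<mu> A + mult_dual X g \<mu> B'"
    using A B' AB i1 i2 by (simp add: mult_dual_def sint_def)
next
  fix A assume A: "A \<in> borel_sets X"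
  have sm: "signed_measure X \<mu>" using m by (simp add: Mreg_def)
  have "\<bar>sint X \<mu> (\<lambda>x. indicator A x * g x)\<bar> \<le> Bg * (measure (jordan_pos X \<mu>) (topspace X) + measure (jordan_neg X \<mu>) (topspace X))"
    by (rule sint_bound) (use B in \<open>auto simp: indicator_def abs_mult\<close>)
  also have "\<dots> = Bg * tv_norm X \<mu>" unfolding tv_norm_def using jpn_sum[OF sm borel_top] by simp
  finally show "\<bar>mult_dual X g \<mu> A\<bar> \<le> Bg * tv_norm X \<mu>" using A by (simp add: mult_dual_def)
qed

lemma psf_fab:
  assumes m: "\<mu> \<in> Mreg X" and c: "continuous_map X X \<phi>"
  shows "fab X (psf X \<phi> \<mu>) (tv_norm X \<mu>)"
proof (rule sm_fab[OF psf_sm[OF Mreg_sm[OF m] c]], intro ballI)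
  fix A assume A: "A \<in> borel_sets X"
  have sm: "signed_measure X \<mu>" using m by (simp add: Mreg_def)
  have pA: "pre X \<phi> A \<in> borel_sets X" by (rule pre_borel[OF c A])
  have "\<bar>\<mu> (pre X \<phi> A)\<bar> \<le> variation X \<mu> (pre X \<phi> A)" by (rule abs_le_var[OF sm pA])
  also have "\<dots> \<le> tv_norm X \<mu>" unfolding tv_norm_def
    by (rule var_mono[OF sm pA borel_top borel_sub[OF pA]])
  finally show "\<bar>psf X \<phi> \<mu> A\<bar> \<le> tv_norm X \<mu>" using A by (simp add: psf_def)
qed

lemma fab_add:
  assumes "fab X \<mu> K1" "fab X \<nu> K2"
  shows "fab X (\<lambda>A. \<mu> A + \<nu> A) (K1 + K2)"
  unfolding fab_def
proof (intro conjI ballI impI)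
  show "\<mu> {} + \<nu> {} = 0" using assms by (simp add: fab_def)
  fix A B assume "A \<in> borel_sets X" "B \<in> borel_sets X" "A \<inter> B = {}"
  then show "\<mu> (A \<union> B) + \<nu> (A \<union> B) = \<mu> A + \<nu> A + (\<mu> B + \<nu> B)" using assms by (simp add: fab_def)
next
  fix A assume "A \<in> borel_sets X"
  then have "\<bar>\<mu> A\<bar> \<le> K1" "\<bar>\<nu> A\<bar> \<le> K2" using assms by (auto simp: fab_def)
  then show "\<bar>\<mu> A + \<nu> A\<bar> \<le> K1 + K2" by linarith
qed

lemma Aop_eq:
  assumes X: "compact_space X" "Hausdorff_space X" and c: "continuous_map X X \<phi>"
    and m: "\<mu> \<in> Mreg X"
  shows "Aop X (\<lambda>f. f \<circ> \<phi>) g \<mu> = (\<lambda>A. psf X \<phi> \<mu> A + mult_dual X g \<mu> A)"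
  unfolding Aop_def adj_eq[OF X c m] ..

lemma Aop_fab:
  assumes X: "compact_space X" "Hausdorff_space X" and c: "continuous_map X X \<phi>"
    and m: "\<mu> \<in> Mreg X" and g: "bborel X g"
    and B: "\<And>x. x \<in> topspace X \<Longrightarrow> \<bar>g x\<bar> \<le> Bg" "0 \<le> Bg"
  shows "fab X (Aop X (\<lambda>f. f \<circ> \<phi>) g \<mu>) (tv_norm X \<mu> + Bg * tv_norm X \<mu>)"
  unfolding Aop_eq[OF X c m] by (rule fab_add[OF psf_fab[OF m c] md_fab[OF g B m]])

lemma Aop_dsf:
  assumes X: "compact_space X" "Hausdorff_space X" and c: "continuous_map X X \<phi>"
    and a: "a \<in> topspace X" and g: "bborel X g"
  shows "Aop X (\<lambda>f. f \<circ> \<phi>) g (dsf X a) = (\<lambda>A. dsf X (\<phi> a) A + g a * dsf X a A)"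
  unfolding Aop_eq[OF X c dsf_Mreg[OF X(2) a]] psf_dsf[OF c a] md_dsf[OF g a] ..


definition G :: "('a::wellorder \<Rightarrow> nat \<Rightarrow> 'a) \<Rightarrow> 'a \<Rightarrow> 'a set" where
  "G s a = (if lim_ord a then insert a (range (s a)) else {a})"

lemma ls_facts:
  assumes "ladder_system s" "lim_ord \<alpha>"
  shows "strict_mono (s \<alpha>)" "\<And>n. \<not> lim_ord (s \<alpha> n)" "\<And>n. s \<alpha> n < \<alpha>" "\<And>\<beta>. \<beta> < \<alpha> \<Longrightarrow> \<exists>n. \<beta> < s \<alpha> n"
  using assms unfolding ladder_system_def by blast+

lemma lt_topspace[simp]: "topspace (ladder_top s) = UNIV" by simp

lemma open_nonlim: "(\<And>x. x \<in> A \<Longrightarrow> \<not> lim_ord x) \<Longrightarrow> openin (ladder_top s) A"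
  by (auto simp: openin_ladder_top)

lemma open_diff_finite: "openin (ladder_top s) U \<Longrightarrow> finite F \<Longrightarrow> openin (ladder_top s) (U - F)"
  unfolding openin_ladder_top
proof (intro ballI impI)
  fix \<alpha> assume U: "\<forall>\<alpha>\<in>U. lim_ord \<alpha> \<longrightarrow> finite (range (s \<alpha>) - U)" and F: "finite F"
    and a: "\<alpha> \<in> U - F" "lim_ord \<alpha>"
  have "range (s \<alpha>) - (U - F) \<subseteq> (range (s \<alpha>) - U) \<union> F" by blast
  moreover have "finite ((range (s \<alpha>) - U) \<union> F)" using U F a by blast
  ultimately show "finite (range (s \<alpha>) - (U - F))" using finite_subset by blast
qed

lemma closedin_lt: "closedin (ladder_top s) C \<longleftrightarrow> openin (ladder_top s) (- C)"
  by (simp add: closedin_def Compl_eq_Diff_UNIV)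

lemma G_open:
  assumes ls: "ladder_system s"
  shows "openin (ladder_top s) (G s a)"
  unfolding openin_ladder_top G_def using ls_facts(2)[OF ls] by auto

lemma G_self: "a \<in> G s a" by (simp add: G_def)

lemma G_lim:
  assumes "ladder_system s" "x \<in> G s a" "lim_ord x"
  shows "x = a"
  using assms ls_facts(2)[OF assms(1)] by (auto simp: G_def split: if_splits)

lemma G_countable: "countable (G s a)" by (simp add: G_def)

lemma ladder_inter_finite:
  assumes ls: "ladder_system s" and a: "lim_ord \<alpha>" and b: "lim_ord \<beta>" and lt: "\<alpha> < \<beta>"
  shows "finite (range (s \<alpha>) \<inter> range (s \<beta>))"
proof -
  obtain n0 where n0: "\<alpha> < s \<beta> n0" using ls_facts(4)[OF ls b lt] by blast
  have "range (s \<alpha>) \<inter> range (s \<beta>) \<subseteq> s \<beta> ` {..<n0}"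
  proof
    fix x assume x: "x \<in> range (s \<alpha>) \<inter> range (s \<beta>)"
    then obtain m n where m: "x = s \<alpha> m" and n: "x = s \<beta> n" by blast
    have "x < \<alpha>" using m ls_facts(3)[OF ls a] by simp
    moreover have "n0 \<le> n \<Longrightarrow> s \<beta> n0 \<le> s \<beta> n"
      using ls_facts(1)[OF ls b] by (simp add: strict_mono_less_eq)
    ultimately have "n < n0" using n n0 by (meson not_le order.strict_trans2 order.asym)
    then show "x \<in> s \<beta> ` {..<n0}" using n by blast
  qed
  then show ?thesis using finite_subset by blast
qed

lemma G_inter_finite:
  assumes ls: "ladder_system s" and ne: "a \<noteq> b"
  shows "finite (G s a \<inter> G s b)"
proof (cases "lim_ord a \<and> lim_ord b")
  case True
  have e: "G s a \<inter> G s b = range (s a) \<inter> range (s b)"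
    using True ne ls_facts(2)[OF ls] by (auto simp: G_def)
  have "a < b \<or> b < a" using ne by auto
  then show ?thesis unfolding e
    using ladder_inter_finite[OF ls] True by (metis inf_commute)
next
  case False
  then show ?thesis by (auto simp: G_def)
qed

lemma finite_closed: 
  assumes "finite E"
  shows "closedin (ladder_top s) E"
  unfolding closedin_lt openin_ladder_top
proof (intro ballI impI)
  fix \<beta> assume "\<beta> \<in> - E" "lim_ord \<beta>"
  have "range (s \<beta>) - - E \<subseteq> E" by auto
  then show "finite (range (s \<beta>) - - E)" using assms finite_subset by blast
qed

lemma finite_compact: "finite E \<Longrightarrow> compactin (ladder_top s) E"
  by (simp add: finite_imp_compactin)

lemma G_closed:
  assumes ls: "ladder_system s"
  shows "closedin (ladder_top s) (G s a)"
  unfolding closedin_lt openin_ladder_top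
proof (intro ballI impI)
  fix \<beta> assume b: "\<beta> \<in> - G s a" "lim_ord \<beta>"
  then have ne: "\<beta> \<noteq> a" using G_self by auto
  have "range (s \<beta>) - - G s a \<subseteq> G s \<beta> \<inter> G s a" using b by (auto simp: G_def)
  then show "finite (range (s \<beta>) - - G s a)"
    using G_inter_finite[OF ls ne] finite_subset by blast
qed

lemma G_compact:
  assumes ls: "ladder_system s"
  shows "compactin (ladder_top s) (G s a)"
proof (cases "lim_ord a")
  case False
  then show ?thesis by (simp add: G_def finite_compact)
next
  case True
  show ?thesis unfolding compactin_def
  proof (intro conjI allI impI)
    show "G s a \<subseteq> topspace (ladder_top s)" by simp
    fix \<U> assume U: "(\<forall>U\<in>\<U>. openin (ladder_top s) U) \<and> G s a \<subseteq> \<Union>\<U>"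
    then have "\<forall>x\<in>G s a. \<exists>V. x \<in> V \<and> V \<in> \<U>" by blast
    then obtain h where h: "\<And>x. x \<in> G s a \<Longrightarrow> x \<in> h x \<and> h x \<in> \<U>" using bchoice by metis
    define U0 where "U0 = h a"
    have U0: "a \<in> U0" "U0 \<in> \<U>" using h G_self by (auto simp: U0_def)
    then have fin: "finite (range (s a) - U0)" using U True by (auto simp: openin_ladder_top)
    define F where "F = insert U0 (h ` (range (s a) - U0))"
    have "finite F" using fin by (simp add: F_def)
    moreover have "F \<subseteq> \<U>" using h U0 by (auto simp: F_def G_def True)
    moreover have "G s a \<subseteq> \<Union>F"
    proof
      fix x assume x: "x \<in> G s a"
      show "x \<in> \<Union>F"
      proof (cases "x \<in> U0")
        case True then show ?thesis by (auto simp: F_def)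
      next
        case False
        then have "x \<in> range (s a) - U0" using x U0 by (auto simp: G_def True)
        then show ?thesis using h x by (auto simp: F_def)
      qed
    qed
    ultimately show "\<exists>\<F>. finite \<F> \<and> \<F> \<subseteq> \<U> \<and> G s a \<subseteq> \<Union>\<F>" by blast
  qed
qed

lemma compact_countable:
  assumes ls: "ladder_system s" and C: "compactin (ladder_top s) C"
  shows "countable C" "finite {x \<in> C. lim_ord x}"
proof -
  have cov: "(\<forall>U\<in>G s ` C. openin (ladder_top s) U) \<and> C \<subseteq> \<Union>(G s ` C)"
    using G_open[OF ls] G_self by blast
  have "\<exists>\<F>. finite \<F> \<and> \<F> \<subseteq> G s ` C \<and> C \<subseteq> \<Union>\<F>"
    using conjunct2[OF C[unfolded compactin_def], rule_format, OF cov] .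
  then obtain \<F> where F: "finite \<F>" "\<F> \<subseteq> G s ` C" "C \<subseteq> \<Union>\<F>" by blast
  then obtain C' where C': "C' \<subseteq> C" "finite C'" "\<F> = G s ` C'"
    using finite_subset_image[OF F(1) F(2)] by blast
  have sub: "C \<subseteq> (\<Union>c\<in>C'. G s c)" using F(3) C'(3) by auto
  show "countable C"
    using countable_subset[OF sub countable_UN[OF countable_finite[OF C'(2)] G_countable]] .
  have "{x \<in> C. lim_ord x} \<subseteq> C'"
  proof
    fix x assume "x \<in> {x \<in> C. lim_ord x}"
    then obtain c where "c \<in> C'" "x \<in> G s c" "lim_ord x" using sub by blast
    then show "x \<in> C'" using G_lim[OF ls] by blast
  qed
  then show "finite {x \<in> C. lim_ord x}" using C'(2) finite_subset by blast
qed

lemma KT_UNIV: "topspace (K_top s) = UNIV"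
proof -
  have "openin (K_top s) UNIV" by (simp add: openin_K_top Kopen_def openin_ladder_top)
  then show ?thesis using openin_subset by blast
qed

lemma KT_open_Some: "openin (ladder_top s) A \<Longrightarrow> openin (K_top s) (Some ` A)"
  by (simp add: openin_K_top Kopen_def vimage_image_eq inj_vimage_image_eq)

lemma KT_open_coSome:
  assumes "compactin (ladder_top s) C" "closedin (ladder_top s) C"
  shows "openin (K_top s) (- (Some ` C))"
proof -
  have e: "Some -` (- (Some ` C)) = - C" by auto
  show ?thesis using assms unfolding openin_K_top Kopen_def e closedin_lt by simp
qed

lemma KT_closed_Some:
  assumes "compactin (ladder_top s) C" "closedin (ladder_top s) C"
  shows "closedin (K_top s) (Some ` C)"
  using KT_open_coSome[OF assms] by (simp add: closedin_def KT_UNIV Compl_eq_Diff_UNIV)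

lemma KT_Hausdorff:
  assumes ls: "ladder_system s"
  shows "Hausdorff_space (K_top s)"
  unfolding Hausdorff_space_def
proof (intro allI impI)
  fix x y :: "'a option" assume xy: "x \<in> topspace (K_top s) \<and> y \<in> topspace (K_top s) \<and> x \<noteq> y"
  show "\<exists>U V. openin (K_top s) U \<and> openin (K_top s) V \<and> x \<in> U \<and> y \<in> V \<and> disjnt U V"
  proof (cases x)
    case None
    then obtain b where b: "y = Some b" using xy by (cases y) auto
    show ?thesis
      by (rule exI[of _ "- Some ` G s b"], rule exI[of _ "Some ` G s b"])
         (use None b G_self KT_open_coSome[OF G_compact[OF ls] G_closed[OF ls]] KT_open_Some[OF G_open[OF ls]]
          in \<open>auto simp: disjnt_def\<close>)
  next
    case (Some a)
    show ?thesis
    proof (cases y)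
      case None
      show ?thesis
        by (rule exI[of _ "Some ` G s a"], rule exI[of _ "- Some ` G s a"])
           (use None Some G_self KT_open_coSome[OF G_compact[OF ls] G_closed[OF ls]] KT_open_Some[OF G_open[OF ls]]
            in \<open>auto simp: disjnt_def\<close>)
    next
      case (Some b)
      then have ab: "a \<noteq> b" using xy \<open>x = Some a\<close> by auto
      define F where "F = (G s a \<inter> G s b) - {a, b}"
      have fF: "finite F" using G_inter_finite[OF ls ab] by (simp add: F_def)
      define U where "U = G s a - F - {b}"
      define V where "V = G s b - F - {a}"
      have oU: "openin (ladder_top s) U" unfolding U_def
        by (rule open_diff_finite[OF open_diff_finite[OF G_open[OF ls] fF]]) simp
      have oV: "openin (ladder_top s) V" unfolding V_def
        by (rule open_diff_finite[OF open_diff_finite[OF G_open[OF ls] fF]]) simp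
      have "a \<in> U" "b \<in> V" using G_self ab by (auto simp: U_def V_def F_def)
      moreover have "U \<inter> V = {}" by (auto simp: U_def V_def F_def)
      ultimately show ?thesis
        using KT_open_Some[OF oU] KT_open_Some[OF oV] \<open>x = Some a\<close> Some
        by (intro exI[of _ "Some ` U"] exI[of _ "Some ` V"]) (auto simp: disjnt_def)
    qed
  qed
qed

lemma KT_compact:
  shows "compact_space (K_top s)"
  unfolding compact_space_def compactin_def
proof (intro conjI allI impI)
  show "topspace (K_top s) \<subseteq> topspace (K_top s)" by simp
  fix \<U> assume U: "(\<forall>U\<in>\<U>. openin (K_top s) U) \<and> topspace (K_top s) \<subseteq> \<Union>\<U>"
  have "None \<in> \<Union>\<U>" using U KT_UNIV by (metis UNIV_I subsetD)
  then obtain V0 where V0: "V0 \<in> \<U>" "None \<in> V0" by (meson UnionE)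
  have KV0: "Kopen s V0" using U V0 openin_K_top by blast
  have c: "compactin (ladder_top s) (- (Some -` V0))"
    using KV0 V0(2) unfolding Kopen_def by blast
  have o: "\<forall>W\<in>(\<lambda>W. Some -` W) ` \<U>. openin (ladder_top s) W"
  proof
    fix W assume "W \<in> (\<lambda>W. Some -` W) ` \<U>"
    then obtain W' where "W' \<in> \<U>" "W = Some -` W'" by blast
    then show "openin (ladder_top s) W" using U openin_K_top Kopen_def by metis
  qed
  have cv: "- (Some -` V0) \<subseteq> \<Union>((\<lambda>W. Some -` W) ` \<U>)"
  proof
    fix x assume "x \<in> - (Some -` V0)"
    have "Some x \<in> \<Union>\<U>" using U KT_UNIV by (metis UNIV_I subsetD)
    then show "x \<in> \<Union>((\<lambda>W. Some -` W) ` \<U>)" by blast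
  qed
  obtain \<F>' where F': "finite \<F>'" "\<F>' \<subseteq> (\<lambda>W. Some -` W) ` \<U>" "- (Some -` V0) \<subseteq> \<Union>\<F>'"
    using conjunct2[OF c[unfolded compactin_def], rule_format, OF conjI[OF o cv]] by blast
  obtain \<F> where F: "\<F> \<subseteq> \<U>" "finite \<F>" "\<F>' = (\<lambda>W. Some -` W) ` \<F>"
    using finite_subset_image[OF F'(1) F'(2)] by blast
  have "topspace (K_top s) \<subseteq> \<Union>(insert V0 \<F>)"
  proof
    fix z assume "z \<in> topspace (K_top s)"
    show "z \<in> \<Union>(insert V0 \<F>)"
    proof (cases z)
      case None then show ?thesis using V0 by blast
    next
      case (Some a)
      show ?thesis
      proof (cases "a \<in> Some -` V0")
        case True then show ?thesis using Some by blast
      next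
        case False
        then have "a \<in> \<Union>\<F>'" using F'(3) by blast
        then show ?thesis using F(3) Some by blast
      qed
    qed
  qed
  moreover have "finite (insert V0 \<F>)" "insert V0 \<F> \<subseteq> \<U>" using F V0 by auto
  ultimately show "\<exists>\<F>. finite \<F> \<and> \<F> \<subseteq> \<U> \<and> topspace (K_top s) \<subseteq> \<Union>\<F>" by blast
qed

lemma CK_exceptions:
  assumes ls: "ladder_system s" and h: "h \<in> CK (K_top s)"
  shows "countable {x. h (Some x) \<noteq> h None}"
proof -
  define V where "V n = {y \<in> topspace (K_top s). h y \<in> ball (h None) (1 / (real n + 1))}" for n :: nat
  have oV: "openin (K_top s) (V n)" for n
    using h unfolding V_def CK_def by (intro openin_continuous_map_preimage) auto
  have NV: "None \<in> V n" for n by (simp add: V_def KT_UNIV)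
  have cV: "countable (- (Some -` V n))" for n
    using oV[of n] NV[of n] compact_countable(1)[OF ls] by (auto simp: openin_K_top Kopen_def)
  have "{x. h (Some x) \<noteq> h None} \<subseteq> (\<Union>n. - (Some -` V n))"
  proof
    fix x assume "x \<in> {x. h (Some x) \<noteq> h None}"
    then have "0 < dist (h (Some x)) (h None)" by simp
    then obtain n where "1 / (real n + 1) < dist (h (Some x)) (h None)"
      by (metis nat_approx_posE of_nat_Suc add.commute)
    then have "x \<notin> Some -` V n" by (simp add: V_def dist_commute)
    then show "x \<in> (\<Union>n. - (Some -` V n))" by blast
  qed
  then show ?thesis using cV by (meson countable_UN countable_subset UNIV_I countableI_type)
qed

lemma ladder_map_cont:
  assumes ls: "ladder_system s" and lm: "ladder_map \<phi>"
  shows "continuous_map (K_top s) (K_top s) \<phi>"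
  unfolding continuous_map_def
proof (intro conjI allI impI)
  show "\<phi> \<in> topspace (K_top s) \<rightarrow> topspace (K_top s)" by (simp add: KT_UNIV)
  fix V assume oV: "openin (K_top s) V"
  define W where "W = {x \<in> topspace (K_top s). \<phi> x \<in> V}"
  have inj: "inj_on \<phi> (Some ` {x. \<not> lim_ord x})" and toL: "\<And>x. \<not> lim_ord x \<Longrightarrow> \<phi> (Some x) \<in> Some ` {\<alpha>. lim_ord \<alpha>}"
    and limN: "\<And>\<alpha>. lim_ord \<alpha> \<Longrightarrow> \<phi> (Some \<alpha>) = None" and NN: "\<phi> None = None"
    using lm unfolding ladder_map_def by blast+
  show "openin (K_top s) W"
  proof (cases "None \<in> V")
    case False
    have "None \<notin> W" using False NN by (simp add: W_def)
    moreover have "openin (ladder_top s) (Some -` W)"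
      by (rule open_nonlim) (use False limN in \<open>auto simp: W_def\<close>)
    ultimately show ?thesis by (simp add: openin_K_top Kopen_def)
  next
    case True
    define C where "C = - (Some -` V)"
    have cC: "compactin (ladder_top s) C" using oV True by (simp add: openin_K_top Kopen_def C_def)
    define L where "L = {b \<in> C. lim_ord b}"
    have fL: "finite L" using compact_countable(2)[OF ls cC] by (simp add: L_def)
    define E where "E = - (Some -` W)"
    have Enl: "\<not> lim_ord a" if "a \<in> E" for a
      using that True limN by (auto simp: E_def W_def KT_UNIV)
    have "\<phi> ` (Some ` E) \<subseteq> Some ` L"
    proof
      fix z assume "z \<in> \<phi> ` (Some ` E)"
      then obtain a where a: "a \<in> E" "z = \<phi> (Some a)" by blast
      obtain b where b: "\<phi> (Some a) = Some b" "lim_ord b" using toL[OF Enl[OF a(1)]] by blast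
      have "b \<in> C" using a(1) b(1) by (simp add: E_def W_def C_def KT_UNIV)
      then show "z \<in> Some ` L" using a b by (simp add: L_def)
    qed
    then have "finite (\<phi> ` (Some ` E))" using fL finite_subset by blast
    moreover have "inj_on \<phi> (Some ` E)" by (rule inj_on_subset[OF inj]) (use Enl in blast)
    ultimately have "finite (Some ` E)" using finite_imageD by blast
    then have fE: "finite E" using finite_imageD inj_Some by (metis inj_on_subset subset_UNIV)
    have "openin (ladder_top s) (Some -` W)"
    proof -
      have "openin (ladder_top s) (UNIV - E)"
        using open_diff_finite[OF openin_topspace[of "ladder_top s"] fE] by simp
      moreover have "UNIV - E = Some -` W" by (auto simp: E_def)
      ultimately show ?thesis by simp
    qed
    moreover have "None \<in> W" using True NN by (simp add: W_def KT_UNIV)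
    moreover have "compactin (ladder_top s) (- (Some -` W))" using fE finite_compact E_def by metis
    moreover have "closedin (ladder_top s) (- (Some -` W))" using fE finite_closed E_def by metis
    ultimately show ?thesis by (simp add: openin_K_top Kopen_def)
  qed
qed

lemma clopen_indicator:
  assumes "openin X S" "openin X (topspace X - S)"
  shows "continuous_map X euclideanreal (indicator S)"
  unfolding continuous_map_def
proof (intro conjI allI impI)
  show "indicator S \<in> topspace X \<rightarrow> topspace euclideanreal" by simp
  fix U :: "real set" assume "openin euclideanreal U"
  have "{x \<in> topspace X. indicator S x \<in> U} =
      (if 1 \<in> U then S \<inter> topspace X else {}) \<union> (if 0 \<in> U then topspace X - S else {})"
    by (auto simp: indicator_def)
  moreover have "S \<inter> topspace X = S" using assms(1) openin_subset by blast
  ultimately show "openin X {x \<in> topspace X. indicator S x \<in> U}" using assms by auto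
qed

lemma W_indicator:
  assumes ls: "ladder_system s" and a: "lim_ord \<alpha>" and "\<not> lim_ord \<xi>"
  shows "indicator (Some ` (G s \<alpha> - {\<xi>})) \<in> CK (K_top s)"
proof -
  let ?W = "G s \<alpha> - {\<xi>}"
  have oW: "openin (ladder_top s) ?W" by (rule open_diff_finite[OF G_open[OF ls]]) simp
  have cl1: "closedin (ladder_top s) (- {\<xi>})"
    unfolding closedin_lt using assms(3) by (auto intro: open_nonlim)
  have cW: "closedin (ladder_top s) ?W"
    using closedin_Int[OF G_closed[OF ls] cl1] by (simp add: Diff_eq)
  have kW: "compactin (ladder_top s) ?W" by (rule closed_compactin[OF G_compact[OF ls] _ cW]) auto
  have "openin (K_top s) (Some ` ?W)" by (rule KT_open_Some[OF oW])
  moreover have "openin (K_top s) (topspace (K_top s) - Some ` ?W)"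
    using KT_open_coSome[OF kW cW] by (simp add: KT_UNIV Compl_eq_Diff_UNIV)
  ultimately show ?thesis unfolding CK_def by (simp add: clopen_indicator)
qed


unbundle cardinal_syntax

lemma om_bound:
  assumes om: "is_omega1 TYPE('a::wellorder)" and A: "countable (A::'a set)"
  shows "\<exists>z. \<forall>a\<in>A. a < z"
proof (rule ccontr)
  assume "\<not> ?thesis"
  then have "\<forall>z. \<exists>a\<in>A. z \<le> a" by (meson not_le)
  then have "UNIV \<subseteq> (\<Union>a\<in>A. insert a {y. y < a})" by (auto simp: le_less)
  moreover have "countable (\<Union>a\<in>A. insert a {y. y < a})"
    using om A unfolding is_omega1_def by (intro countable_UN) auto
  ultimately have "countable (UNIV :: 'a set)" using countable_subset by blast
  then show False using om unfolding is_omega1_def by blast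
qed

lemma om_unbounded:
  assumes om: "is_omega1 TYPE('a::wellorder)" and A: "uncountable (A::'a set)"
  shows "\<exists>a\<in>A. y < a"
proof (rule ccontr)
  assume "\<not> ?thesis"
  then have "A \<subseteq> insert y {x. x < y}" by (auto simp: not_less le_less)
  moreover have "countable (insert y {x. x < y})" using om unfolding is_omega1_def by auto
  ultimately show False using A countable_subset by blast
qed

definition succ :: "'a::wellorder \<Rightarrow> 'a" where "succ y = (LEAST z. y < z)"

lemma succ_gt:
  assumes om: "is_omega1 TYPE('a::wellorder)"
  shows "(y::'a) < succ y"
proof -
  obtain z where "\<forall>a\<in>{y}. a < z" using om_bound[OF om, of "{y}"] by auto
  then have "y < z" by simp
  then show ?thesis unfolding succ_def by (rule LeastI)
qed

lemma succ_nonlim: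
  assumes om: "is_omega1 TYPE('a::wellorder)"
  shows "\<not> lim_ord (succ (y::'a))"
proof
  assume "lim_ord (succ y)"
  then obtain u where "y < u" "u < succ y" using succ_gt[OF om] unfolding lim_ord_def by blast
  then show False unfolding succ_def using not_less_Least by blast
qed

lemma lim_above:
  assumes om: "is_omega1 TYPE('a::wellorder)"
  shows "\<exists>L. lim_ord L \<and> (y::'a) < L"
proof -
  define z where "z n = (succ ^^ n) y" for n
  have zs: "z (Suc n) = succ (z n)" for n by (simp add: z_def)
  have zlt: "z n < z (Suc n)" for n using succ_gt[OF om] zs by simp
  obtain w where w: "\<forall>a\<in>range z. a < w" using om_bound[OF om, of "range z"] by auto
  define L where "L = (LEAST x. \<forall>n. z n < x)"
  have zL: "\<forall>n. z n < L" unfolding L_def by (rule LeastI[of _ w]) (use w in auto)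
  have "y < L" using zL[rule_format, of 0] by (simp add: z_def)
  moreover have "lim_ord L" unfolding lim_ord_def
  proof (intro conjI allI impI)
    show "\<exists>y. y < L" using \<open>y < L\<close> by blast
    fix v assume "v < L"
    then have "\<not> (\<forall>n. z n < v)" unfolding L_def using not_less_Least by blast
    then obtain n where "v \<le> z n" by (meson not_less)
    then show "\<exists>u. v < u \<and> u < L" using zlt[of n] zL by (meson order.strict_trans1)
  qed
  ultimately show ?thesis by blast
qed

lemma lims_uncountable:
  assumes om: "is_omega1 TYPE('a::wellorder)"
  shows "uncountable {x::'a. lim_ord x}"
proof
  assume "countable {x::'a. lim_ord x}"
  from om_bound[OF om this] obtain z where z: "\<forall>a\<in>{x::'a. lim_ord x}. a < z" by (elim exE)
  from lim_above[OF om, of z] obtain L where L: "lim_ord L" "z < L" by blast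
  have "L < z" using z L(1) by blast
  then show False using L(2) by (meson less_asym)
qed

lemma nonlims_uncountable:
  assumes om: "is_omega1 TYPE('a::wellorder)"
  shows "uncountable {x::'a. \<not> lim_ord x}"
proof
  assume "countable {x::'a. \<not> lim_ord x}"
  from om_bound[OF om this] obtain z where "\<forall>a\<in>{x::'a. \<not> lim_ord x}. a < z" by (elim exE)
  then have "succ z < z" using succ_nonlim[OF om, of z] by blast
  then show False using succ_gt[OF om, of z] by (meson less_asym)
qed

lemma countable_le_card:
  assumes "countable A" "infinite B"
  shows "|A| \<le>o |B|"
proof -
  obtain f :: "_ \<Rightarrow> nat" where "inj_on f A" using assms(1) by (auto simp: countable_def)
  then have "|A| \<le>o |UNIV :: nat set|" using card_of_ordLeq[of A "UNIV :: nat set"] by blast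
  moreover have "|UNIV :: nat set| \<le>o |B|" using assms(2) infinite_iff_card_of_nat by blast
  ultimately show ?thesis using ordLeq_transitive by blast
qed

lemma ladder_map_ex:
  assumes om: "is_omega1 TYPE('a::wellorder)"
  shows "\<exists>\<phi> :: 'a option \<Rightarrow> 'a option. ladder_map \<phi>"
proof -
  let ?L = "{x::'a. lim_ord x}" and ?N = "{x::'a. \<not> lim_ord x}"
  have infL: "infinite ?L" using lims_uncountable[OF om] countable_finite by blast
  have cov: "(UNIV :: 'a set) \<subseteq> (\<Union>a\<in>?L. {y. y \<le> a})"
  proof
    fix y :: 'a
    from lim_above[OF om, of y] obtain L where "lim_ord L" "y < L" by (elim exE conjE)
    then show "y \<in> (\<Union>a\<in>?L. {y. y \<le> a})" by (auto intro: less_imp_le)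
  qed
  have "|\<Union>a\<in>?L. {y. y \<le> a}| \<le>o |?L|"
  proof (rule card_of_UNION_ordLeq_infinite[OF infL])
    show "|?L| \<le>o |?L|" by (rule card_of_mono1) simp
    show "\<forall>i\<in>?L. |{y. y \<le> i}| \<le>o |?L|"
    proof
      fix i :: 'a
      have "{y. y \<le> i} = insert i {y. y < i}" by (auto simp: le_less)
      then have "countable {y. y \<le> i}" using om unfolding is_omega1_def by simp
      then show "|{y. y \<le> i}| \<le>o |?L|" using countable_le_card infL by blast
    qed
  qed
  moreover have "|?N| \<le>o |\<Union>a\<in>?L. {y. y \<le> a}|"
    by (rule card_of_mono1) (use cov in blast)
  ultimately have "|?N| \<le>o |?L|" using ordLeq_transitive by blast
  then obtain j where j: "inj_on j ?N" "j ` ?N \<subseteq> ?L" using card_of_ordLeq[of ?N ?L] by blast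
  define \<phi> where "\<phi> z = (case z of None \<Rightarrow> None | Some x \<Rightarrow> if lim_ord x then None else Some (j x))" for z
  have "ladder_map \<phi>"
    unfolding ladder_map_def
  proof (intro conjI allI impI)
    show "inj_on \<phi> (Some ` ?N)" using j(1) by (auto simp: inj_on_def \<phi>_def)
    show "\<phi> (Some x) \<in> Some ` ?L" if "\<not> lim_ord x" for x using j(2) that by (auto simp: \<phi>_def)
    show "\<phi> (Some \<alpha>) = None" if "lim_ord \<alpha>" for \<alpha> using that by (simp add: \<phi>_def)
    show "\<phi> None = None" by (simp add: \<phi>_def)
  qed
  then show ?thesis by blast
qed


lemma fiber_uncountable:
  assumes A: "uncountable A" and D: "countable D" and sel: "\<And>a. a \<in> A \<Longrightarrow> sel a \<in> D"
  shows "\<exists>d\<in>D. uncountable {a\<in>A. sel a = d}"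
proof (rule ccontr)
  assume "\<not> ?thesis"
  then have "\<forall>d\<in>D. countable {a\<in>A. sel a = d}" by blast
  then have "countable (\<Union>d\<in>D. {a\<in>A. sel a = d})" using D by (intro countable_UN) auto
  moreover have "A \<subseteq> (\<Union>d\<in>D. {a\<in>A. sel a = d})" using sel by blast
  ultimately show False using A countable_subset by blast
qed

lemma fab_mono: "fab X \<nu> K \<Longrightarrow> K \<le> K' \<Longrightarrow> fab X \<nu> K'"
  unfolding fab_def by (meson order_trans)

lemma tv_nonneg: "\<mu> \<in> Mreg X \<Longrightarrow> 0 \<le> tv_norm X \<mu>"
  unfolding tv_norm_def by (rule var_nonneg[OF Mreg_sm borel_top])

lemma sing_borel:
  assumes ls: "ladder_system s"
  shows "{p} \<in> borel_sets (K_top s)"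
proof -
  have "compactin (K_top s) {p}" by (simp add: finite_imp_compactin KT_UNIV)
  then have "closedin (K_top s) {p}" by (rule compactin_imp_closedin[OF KT_Hausdorff[OF ls]])
  then show ?thesis by (rule borel_closed)
qed

lemma lm_facts:
  assumes lm: "ladder_map \<phi>"
  shows "inj_on \<phi> (Some ` {x. \<not> lim_ord x})" "\<And>x. \<not> lim_ord x \<Longrightarrow> \<phi> (Some x) \<in> Some ` {\<alpha>. lim_ord \<alpha>}"
    "\<And>\<alpha>. lim_ord \<alpha> \<Longrightarrow> \<phi> (Some \<alpha>) = None" "\<phi> None = None"
  using lm unfolding ladder_map_def by blast+

lemma not_b:
  fixes s :: "'a::wellorder \<Rightarrow> nat \<Rightarrow> 'a"
  assumes om: "is_omega1 TYPE('a)" and ls: "ladder_system s" and lm: "ladder_map \<phi>"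
    and g: "bborel (K_top s) g"
  shows "\<not> cond_b (K_top s) (\<lambda>f. f \<circ> \<phi>) g"
proof
  let ?X = "K_top s" and ?T = "\<lambda>f. f \<circ> \<phi>"
  have X: "compact_space ?X" "Hausdorff_space ?X" by (rule KT_compact, rule KT_Hausdorff[OF ls])
  have c: "continuous_map ?X ?X \<phi>" by (rule ladder_map_cont[OF ls lm])
  obtain Bg where Bg: "0 \<le> Bg" "\<forall>x\<in>topspace ?X. \<bar>g x\<bar> \<le> Bg" using bborel_bound[OF g] by blast
  let ?R = "Aop ?X ?T g ` Mreg ?X"
  assume "cond_b ?X ?T g"
  then obtain D where D: "countable D" "D \<subseteq> ?R"
      "\<forall>x\<in>?R. \<forall>e>0. \<exists>d\<in>D. tv_norm ?X (\<lambda>A. x A - d A) < e"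
    unfolding cond_b_def Let_def by blast
  define xa where "xa a = Aop ?X ?T g (dsf ?X (Some a))" for a
  have xaR: "xa a \<in> ?R" for a
    unfolding xa_def using dsf_Mreg[OF X(2)] KT_UNIV by blast
  have "\<forall>a. \<exists>d. d \<in> D \<and> tv_norm ?X (\<lambda>A. xa a A - d A) < 1/2"
    using D(3) xaR by (meson half_gt_zero zero_less_one)
  then obtain sel where sel: "\<And>a. sel a \<in> D" "\<And>a. tv_norm ?X (\<lambda>A. xa a A - sel a A) < 1/2"
    by metis
  let ?NL = "{x::'a. \<not> lim_ord x}"
  obtain d where d: "d \<in> D" "uncountable {a\<in>?NL. sel a = d}"
    using fiber_uncountable[OF nonlims_uncountable[OF om] D(1), of sel] sel(1) by blast
  define S where "S = {a\<in>?NL. sel a = d}"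
  obtain \<mu> where \<mu>: "\<mu> \<in> Mreg ?X" "d = Aop ?X ?T g \<mu>" using D(2) d(1) by blast
  define Kd where "Kd = tv_norm ?X \<mu> + Bg * tv_norm ?X \<mu>"
  have fd: "fab ?X d Kd" unfolding \<mu>(2) Kd_def
    by (rule Aop_fab[OF X c \<mu>(1) g]) (use Bg in auto)
  have Kd0: "0 \<le> Kd" using tv_nonneg[OF \<mu>(1)] Bg(1) by (simp add: Kd_def)
  define p where "p a = \<phi> (Some a)" for a
  have big: "1/2 < \<bar>d {p a}\<bar>" if a: "a \<in> S" for a
  proof -
    have nl: "\<not> lim_ord a" using a by (simp add: S_def)
    obtain b where b: "p a = Some b" "lim_ord b" using lm_facts(2)[OF lm nl] by (auto simp: p_def)
    have ne: "p a \<noteq> Some a" using b nl by auto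
    have xe: "xa a = (\<lambda>A. dsf ?X (p a) A + g (Some a) * dsf ?X (Some a) A)"
      unfolding xa_def p_def by (rule Aop_dsf[OF X c _ g]) (simp add: KT_UNIV)
    have fx: "fab ?X (xa a) (tv_norm ?X (dsf ?X (Some a)) + Bg * tv_norm ?X (dsf ?X (Some a)))"
      unfolding xa_def by (rule Aop_fab[OF X c dsf_Mreg[OF X(2)] g]) (use Bg KT_UNIV in auto)
    have fn: "fab ?X (\<lambda>A. xa a A - d A) (tv_norm ?X (dsf ?X (Some a)) + Bg * tv_norm ?X (dsf ?X (Some a)) + Kd)"
      by (rule fab_diff[OF fx fd])
    have "\<bar>xa a {p a} - d {p a}\<bar> \<le> variation ?X (\<lambda>A. xa a A - d A) (topspace ?X)"
      using fab_var_ge[OF fn sing_borel[OF ls]] by (simp add: KT_UNIV)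
    also have "\<dots> < 1/2" using sel(2)[of a] d a by (simp add: S_def tv_norm_def)
    finally have "\<bar>xa a {p a} - d {p a}\<bar> < 1/2" .
    moreover have "xa a {p a} = 1" using xe ne sing_borel[OF ls] by (simp add: dsf_def)
    ultimately show ?thesis by linarith
  qed
  have injp: "inj_on p S"
    using lm_facts(1)[OF lm] unfolding p_def S_def inj_on_def by auto
  define N where "N = nat \<lceil>4 * Kd\<rceil> + 1"
  have "infinite S" using d(2) countable_finite S_def by blast
  then obtain F where F: "finite F" "card F = N" "F \<subseteq> S" using infinite_arbitrarily_large by blast
  have fP: "finite (p ` F)" using F(1) by simp
  have cP: "card (p ` F) = N" using card_image[OF inj_on_subset[OF injp F(3)]] F(2) by simp
  have "(\<Sum>q\<in>p ` F. \<bar>d {q}\<bar>) \<le> 2 * Kd"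
    by (rule fab_points[OF fd fP]) (use sing_borel[OF ls] in auto)
  moreover have "(\<Sum>q\<in>p ` F. (1/2::real)) \<le> (\<Sum>q\<in>p ` F. \<bar>d {q}\<bar>)"
    by (rule sum_mono) (use big F(3) in \<open>auto intro: less_imp_le\<close>)
  moreover have "(\<Sum>q\<in>p ` F. (1/2::real)) = real N / 2" using cP by simp
  moreover have "4 * Kd < real N" unfolding N_def using Kd0 by linarith
  ultimately show False by linarith
qed

lemma bidual_eval:
  fixes s :: "'a::wellorder \<Rightarrow> nat \<Rightarrow> 'a"
  assumes ls: "ladder_system s" and c: "continuous_map (K_top s) (K_top s) \<phi>"
    and g: "bborel (K_top s) g" and f: "f \<in> CK (K_top s)"
  shows "bidual_elt (K_top s) (\<lambda>f. f \<circ> \<phi>) g f (dsf (K_top s) a) = f (\<phi> a) + g a * f a"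
proof -
  let ?X = "K_top s"
  have X: "compact_space ?X" "Hausdorff_space ?X" by (rule KT_compact, rule KT_Hausdorff[OF ls])
  have a: "a \<in> topspace ?X" by (simp add: KT_UNIV)
  obtain B where B: "B \<ge> 0" "\<forall>x\<in>topspace ?X. \<bar>f x\<bar> \<le> B" using CK_bounded[OF X(1) f] by blast
  have fm: "f \<in> borel_measurable (BM ?X)" using f cont_meas by (simp add: CK_def)
  have "sint ?X (\<lambda>A. dsf ?X (\<phi> a) A + g a * dsf ?X a A) f = f (\<phi> a) + g a * f a"
    by (rule sint_two[OF _ a fm]) (use B in \<open>auto simp: KT_UNIV\<close>)
  then show ?thesis
    unfolding bidual_elt_def Aop_dsf[OF X c a g] using dsf_Mreg[OF X(2) a] by simp
qed

lemma bidual_bdd: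
  fixes s :: "'a::wellorder \<Rightarrow> nat \<Rightarrow> 'a"
  assumes ls: "ladder_system s" and c: "continuous_map (K_top s) (K_top s) \<phi>"
    and g: "bborel (K_top s) g" and f1: "f1 \<in> CK (K_top s)" and f2: "f2 \<in> CK (K_top s)"
  shows "bdd_above {\<bar>bidual_elt (K_top s) (\<lambda>f. f \<circ> \<phi>) g f1 \<mu> - bidual_elt (K_top s) (\<lambda>f. f \<circ> \<phi>) g f2 \<mu>\<bar> |
      \<mu>. \<mu> \<in> Mreg (K_top s) \<and> tv_norm (K_top s) \<mu> \<le> 1}"
proof -
  let ?X = "K_top s"
  have X: "compact_space ?X" "Hausdorff_space ?X" by (rule KT_compact, rule KT_Hausdorff[OF ls])
  obtain Bg where Bg: "0 \<le> Bg" "\<forall>x\<in>topspace ?X. \<bar>g x\<bar> \<le> Bg" using bborel_bound[OF g] by blast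
  obtain B1 where B1: "B1 \<ge> 0" "\<forall>x\<in>topspace ?X. \<bar>f1 x\<bar> \<le> B1" using CK_bounded[OF X(1) f1] by blast
  obtain B2 where B2: "B2 \<ge> 0" "\<forall>x\<in>topspace ?X. \<bar>f2 x\<bar> \<le> B2" using CK_bounded[OF X(1) f2] by blast
  have "\<bar>bidual_elt ?X (\<lambda>f. f \<circ> \<phi>) g f1 \<mu> - bidual_elt ?X (\<lambda>f. f \<circ> \<phi>) g f2 \<mu>\<bar>
      \<le> B1 * (3 * (1 + Bg)) + B2 * (3 * (1 + Bg))"
    if m: "\<mu> \<in> Mreg ?X" "tv_norm ?X \<mu> \<le> 1" for \<mu>
  proof -
    have fa: "fab ?X (Aop ?X (\<lambda>f. f \<circ> \<phi>) g \<mu>) (tv_norm ?X \<mu> + Bg * tv_norm ?X \<mu>)"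
      by (rule Aop_fab[OF X c m(1) g]) (use Bg in auto)
    have "tv_norm ?X \<mu> + Bg * tv_norm ?X \<mu> \<le> 1 + Bg"
      using m(2) tv_nonneg[OF m(1)] Bg(1) by (simp add: add_mono mult_left_le)
    then have fa': "fab ?X (Aop ?X (\<lambda>f. f \<circ> \<phi>) g \<mu>) (1 + Bg)" by (rule fab_mono[OF fa])
    have "\<bar>sint ?X (Aop ?X (\<lambda>f. f \<circ> \<phi>) g \<mu>) f1\<bar> \<le> B1 * (3 * (1 + Bg))"
      by (rule fab_sint_bound[OF fa']) (use B1 in auto)
    moreover have "\<bar>sint ?X (Aop ?X (\<lambda>f. f \<circ> \<phi>) g \<mu>) f2\<bar> \<le> B2 * (3 * (1 + Bg))"
      by (rule fab_sint_bound[OF fa']) (use B2 in auto)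
    ultimately show ?thesis using m(1) unfolding bidual_elt_def by simp
  qed
  then show ?thesis unfolding bdd_above_def by blast
qed

lemma bidual_dist_ge:
  fixes s :: "'a::wellorder \<Rightarrow> nat \<Rightarrow> 'a"
  assumes ls: "ladder_system s" and c: "continuous_map (K_top s) (K_top s) \<phi>"
    and g: "bborel (K_top s) g" and f1: "f1 \<in> CK (K_top s)" and f2: "f2 \<in> CK (K_top s)"
  shows "\<bar>(f1 (\<phi> a) + g a * f1 a) - (f2 (\<phi> a) + g a * f2 a)\<bar> \<le>
    bidual_dist (K_top s) (bidual_elt (K_top s) (\<lambda>f. f \<circ> \<phi>) g f1) (bidual_elt (K_top s) (\<lambda>f. f \<circ> \<phi>) g f2)"
proof -
  let ?X = "K_top s"
  have X: "compact_space ?X" "Hausdorff_space ?X" by (rule KT_compact, rule KT_Hausdorff[OF ls])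
  have a: "a \<in> topspace ?X" by (simp add: KT_UNIV)
  have m: "dsf ?X a \<in> Mreg ?X" "tv_norm ?X (dsf ?X a) \<le> 1"
    using dsf_Mreg[OF X(2) a] tv_dsf[of ?X a] by (auto simp: KT_UNIV)
  show ?thesis unfolding bidual_dist_def
    by (rule cSup_upper[OF _ bidual_bdd[OF ls c g f1 f2]])
       (use m bidual_eval[OF ls c g f1, of a] bidual_eval[OF ls c g f2, of a] in force)
qed

lemma not_c:
  fixes s :: "'a::wellorder \<Rightarrow> nat \<Rightarrow> 'a"
  assumes om: "is_omega1 TYPE('a)" and ls: "ladder_system s" and lm: "ladder_map \<phi>"
    and g: "bborel (K_top s) g"
  shows "\<not> cond_c (K_top s) (\<lambda>f. f \<circ> \<phi>) g"
proof
  let ?X = "K_top s" and ?T = "\<lambda>f. f \<circ> \<phi>"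
  have c: "continuous_map ?X ?X \<phi>" by (rule ladder_map_cont[OF ls lm])
  let ?R = "bidual_elt ?X ?T g ` CK ?X"
  assume "cond_c ?X ?T g"
  then obtain D where D: "countable D" "D \<subseteq> ?R"
      "\<forall>x\<in>?R. \<forall>e>0. \<exists>d\<in>D. bidual_dist ?X x d < e"
    unfolding cond_c_def Let_def by blast
  let ?NL = "{x::'a. \<not> lim_ord x}"
  define lam where "lam a = the (\<phi> (Some a))" for a
  have lamp: "\<phi> (Some a) = Some (lam a)" "lim_ord (lam a)" if "\<not> lim_ord a" for a
    using lm_facts(2)[OF lm that] by (auto simp: lam_def)
  have injl: "inj_on lam ?NL"
  proof (rule inj_onI)
    fix x y assume "x \<in> ?NL" "y \<in> ?NL" "lam x = lam y"
    then have "\<phi> (Some x) = \<phi> (Some y)" using lamp by auto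
    then show "x = y" using lm_facts(1)[OF lm] \<open>x \<in> ?NL\<close> \<open>y \<in> ?NL\<close> unfolding inj_on_def by blast
  qed
  define fa :: "'a \<Rightarrow> 'a option \<Rightarrow> real" where "fa a = indicator (Some ` (G s (lam a) - {a}))" for a
  have faCK: "fa a \<in> CK ?X" if "\<not> lim_ord a" for a
    unfolding fa_def by (rule W_indicator[OF ls lamp(2)[OF that] that])
  have ex: "\<forall>a\<in>?NL. \<exists>d. d \<in> D \<and> bidual_dist ?X (bidual_elt ?X ?T g (fa a)) d < 1/2"
  proof
    fix a assume "a \<in> ?NL"
    then have "bidual_elt ?X ?T g (fa a) \<in> ?R" using faCK by blast
    then show "\<exists>d. d \<in> D \<and> bidual_dist ?X (bidual_elt ?X ?T g (fa a)) d < 1/2"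
      using D(3) by (meson half_gt_zero zero_less_one)
  qed
  obtain sel where sel0: "\<forall>a\<in>?NL. sel a \<in> D \<and> bidual_dist ?X (bidual_elt ?X ?T g (fa a)) (sel a) < 1/2"
    using bchoice[OF ex] by (elim exE)
  have sel: "\<And>a. a \<in> ?NL \<Longrightarrow> sel a \<in> D"
      "\<And>a. a \<in> ?NL \<Longrightarrow> bidual_dist ?X (bidual_elt ?X ?T g (fa a)) (sel a) < 1/2"
    using sel0 by blast+
  obtain d where d: "d \<in> D" "uncountable {a\<in>?NL. sel a = d}"
    using fiber_uncountable[OF nonlims_uncountable[OF om] D(1), of sel] sel(1) by blast
  define S where "S = {a\<in>?NL. sel a = d}"
  obtain h where h: "h \<in> CK ?X" "d = bidual_elt ?X ?T g h" using D(2) d(1) by blast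
  define E where "E = {x. h (Some x) \<noteq> h None}"
  have cE: "countable E" unfolding E_def by (rule CK_exceptions[OF ls h(1)])
  have c2: "countable {a\<in>?NL. lam a \<in> E}"
  proof (rule countable_image_inj_on)
    have "lam ` {a\<in>?NL. lam a \<in> E} \<subseteq> E" by blast
    then show "countable (lam ` {a\<in>?NL. lam a \<in> E})" using cE by (rule countable_subset)
    show "inj_on lam {a\<in>?NL. lam a \<in> E}" by (rule inj_on_subset[OF injl]) blast
  qed
  define S' where "S' = S - E - {a\<in>?NL. lam a \<in> E}"
  have uS': "uncountable S'"
  proof
    assume "countable S'"
    moreover have "S \<subseteq> S' \<union> E \<union> {a\<in>?NL. lam a \<in> E}" unfolding S'_def by blast
    moreover have "countable (S' \<union> E \<union> {a\<in>?NL. lam a \<in> E})" using \<open>countable S'\<close> cE c2 by simp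
    ultimately have "countable S" using countable_subset by blast
    then show False using d(2) S_def by simp
  qed
  then have "S' \<noteq> {}" by (metis countable_empty)
  then obtain a0 where a0: "a0 \<in> S'" by blast
  have uS'': "uncountable (S' - {a0} - G s (lam a0))"
  proof
    assume "countable (S' - {a0} - G s (lam a0))"
    moreover have "S' \<subseteq> (S' - {a0} - G s (lam a0)) \<union> insert a0 (G s (lam a0))" by blast
    moreover have "countable ((S' - {a0} - G s (lam a0)) \<union> insert a0 (G s (lam a0)))"
      using countable_Un[OF \<open>countable (S' - {a0} - G s (lam a0))\<close> countable_insert[OF G_countable]] .
    ultimately have "countable S'" using countable_subset by blast
    then show False using uS' by simp
  qed
  then have "S' - {a0} - G s (lam a0) \<noteq> {}" by (metis countable_empty)
  then obtain b where b: "b \<in> S' - {a0} - G s (lam a0)" by blast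
  have a0p: "\<not> lim_ord a0" "a0 \<notin> E" "lam a0 \<notin> E" "sel a0 = d" using a0 by (auto simp: S'_def S_def)
  have bp: "\<not> lim_ord b" "b \<notin> E" "lam b \<notin> E" "sel b = d" "b \<noteq> a0" "b \<notin> G s (lam a0)"
    using b by (auto simp: S'_def S_def)
  have lb: "lim_ord (lam b)" using lamp(2)[OF bp(1)] .
  have lab: "lam b \<noteq> lam a0"
  proof
    assume "lam b = lam a0"
    then have "b = a0" using inj_onD[OF injl] bp(1) a0p(1) by blast
    then show False using bp(5) by simp
  qed
  have "lam b \<notin> G s (lam a0)"
  proof
    assume "lam b \<in> G s (lam a0)"
    then have "lam b = lam a0" by (rule G_lim[OF ls _ lb])
    then show False using lab by simp
  qed
  then have m1: "Some (lam b) \<notin> Some ` (G s (lam a0) - {a0})" by blast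
  have m2: "Some b \<notin> Some ` (G s (lam a0) - {a0})" using bp(6) by blast
  have v0: "fa a0 (\<phi> (Some b)) + g (Some b) * fa a0 (Some b) = 0"
    unfolding lamp(1)[OF bp(1)] fa_def using m1 m2 by simp
  have "lam b \<noteq> b" using lb bp(1) by auto
  then have m3: "Some (lam b) \<in> Some ` (G s (lam b) - {b})" using G_self by blast
  have m4: "Some b \<notin> Some ` (G s (lam b) - {b})" by blast
  have v1: "fa b (\<phi> (Some b)) + g (Some b) * fa b (Some b) = 1"
    unfolding lamp(1)[OF bp(1)] fa_def using m3 m4 by simp
  have vh: "h (\<phi> (Some b)) + g (Some b) * h (Some b) = h None + g (Some b) * h None"
    using lamp(1)[OF bp(1)] bp(2,3) by (simp add: E_def)
  have d0: "bidual_dist ?X (bidual_elt ?X ?T g (fa a0)) d < 1/2" using sel(2)[of a0] a0p by simp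
  have d1: "bidual_dist ?X (bidual_elt ?X ?T g (fa b)) d < 1/2" using sel(2)[of b] bp by simp
  have e0: "\<bar>(fa a0 (\<phi> (Some b)) + g (Some b) * fa a0 (Some b)) - (h (\<phi> (Some b)) + g (Some b) * h (Some b))\<bar>
      \<le> bidual_dist ?X (bidual_elt ?X ?T g (fa a0)) d"
    unfolding h(2) by (rule bidual_dist_ge[OF ls c g faCK[OF a0p(1)] h(1)])
  have e1: "\<bar>(fa b (\<phi> (Some b)) + g (Some b) * fa b (Some b)) - (h (\<phi> (Some b)) + g (Some b) * h (Some b))\<bar>
      \<le> bidual_dist ?X (bidual_elt ?X ?T g (fa b)) d"
    unfolding h(2) by (rule bidual_dist_ge[OF ls c g faCK[OF bp(1)] h(1)])
  show False using e0 e1 d0 d1 v0 v1 by linarith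
qed

lemma comp_bounded_op:
  assumes C: "compact_space X" and c: "continuous_map X X \<phi>"
  shows "bounded_op X (\<lambda>f. f \<circ> \<phi>)"
  unfolding bounded_op_def
proof (intro conjI ballI allI exI[of _ 1])
  fix f assume f: "f \<in> CK X"
  then show "f \<circ> \<phi> \<in> CK X" using continuous_map_compose[OF c] by (simp add: CK_def)
  show "sup_norm X (f \<circ> \<phi>) \<le> 1 * sup_norm X f"
  proof (cases "topspace X = {}")
    case True then show ?thesis by (simp add: sup_norm_def)
  next
    case False
    obtain B where B: "\<forall>x\<in>topspace X. \<bar>f x\<bar> \<le> B" using CK_bounded[OF C f] by blast
    have bdd: "bdd_above ((\<lambda>x. \<bar>f x\<bar>) ` topspace X)" using B by (auto intro!: bdd_aboveI2)
    have "Sup ((\<lambda>x. \<bar>(f \<circ> \<phi>) x\<bar>) ` topspace X) \<le> Sup ((\<lambda>x. \<bar>f x\<bar>) ` topspace X)"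
    proof (rule cSup_least)
      show "(\<lambda>x. \<bar>(f \<circ> \<phi>) x\<bar>) ` topspace X \<noteq> {}" using False by simp
      fix y assume "y \<in> (\<lambda>x. \<bar>(f \<circ> \<phi>) x\<bar>) ` topspace X"
      then obtain x where x: "x \<in> topspace X" "y = \<bar>f (\<phi> x)\<bar>" by auto
      have "\<phi> x \<in> topspace X" using c x(1) unfolding continuous_map_def by blast
      then show "y \<le> Sup ((\<lambda>x. \<bar>f x\<bar>) ` topspace X)" using x(2) by (auto intro: cSup_upper[OF _ bdd])
    qed
    then show ?thesis by (simp add: sup_norm_def)
  qed
next
  fix f h a b x assume "f \<in> CK X" "h \<in> CK X" "x \<in> topspace X"
  show "((\<lambda>y. a * f y + b * h y) \<circ> \<phi>) x = a * (f \<circ> \<phi>) x + b * (h \<circ> \<phi>) x" by simp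
qed

theorem theorem6:
  fixes s :: "'a::wellorder \<Rightarrow> nat \<Rightarrow> 'a"
  assumes "is_omega1 TYPE('a)"
    and "ladder_system s"
  shows "(\<forall>\<phi>. ladder_map \<phi> \<longrightarrow>
            \<not> (\<exists>g. bborel (K_top s) g \<and> cond_b (K_top s) (\<lambda>f. f \<circ> \<phi>) g) \<and>
            \<not> (\<exists>g. bborel (K_top s) g \<and> cond_c (K_top s) (\<lambda>f. f \<circ> \<phi>) g))
      \<and> (\<exists>T. bounded_op (K_top s) T \<and>
            \<not> (\<exists>g. bborel (K_top s) g \<and> cond_b (K_top s) T g) \<and>
            \<not> (\<exists>g. bborel (K_top s) g \<and> cond_c (K_top s) T g))"
proof -
  have P1: "\<not> (\<exists>g. bborel (K_top s) g \<and> cond_b (K_top s) (\<lambda>f. f \<circ> \<phi>) g) \<and>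
            \<not> (\<exists>g. bborel (K_top s) g \<and> cond_c (K_top s) (\<lambda>f. f \<circ> \<phi>) g)"
    if lm: "ladder_map \<phi>" for \<phi>
    using not_b[OF assms lm] not_c[OF assms lm] by blast
  obtain \<phi>0 :: "'a option \<Rightarrow> 'a option" where lm0: "ladder_map \<phi>0" using ladder_map_ex[OF assms(1)] by blast
  have "bounded_op (K_top s) (\<lambda>f. f \<circ> \<phi>0)"
    by (rule comp_bounded_op[OF KT_compact ladder_map_cont[OF assms(2) lm0]])
  then show ?thesis using P1 lm0 by blast
qed

end
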